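(* Let $k$ be a field containing a primitive fourth root of unity $i$, let $H_\pm(8)$ be the quasi-Hopf algebra described in the context, and put $\omega=\frac12(1\pm i)$, $\overline\omega=\frac12(1\mp i)$. Then the space of right cointegrals on $H_\pm(8)$ is $k(\omega P_{x^3}+\overline\omega P_{gx^3})$, the modular element of $H_\pm(8)$ is $\underline g=\omega1+\overline\omega g$, and $\underline g^{-1}=\overline\omega 1+\omega g$.
   Context: $H_{\pm}(8)$ is the unital algebra generated by $g,x$ with relations $g^2=1$, $x^4=0$, $gx=-xg$ (basis $g^ax^b$, $0\le a\le1$, $0\le b\le3$, with dual basis $P_{g^ax^b}$), with $\Delta(g)=g\otimes g$, $\varepsilon(g)=1$, $\Delta(x)=x\otimes(p_+\pm ip_-)+1\otimes p_+x+g\otimes p_-x$, $\varepsilon(x)=0$, where $p_\pm=\frac12(1\pm g)$; reassociator $\Phi=1\otimes1\otimes1-2p_-\otimes p_-\otimes p_-$, antipode $S(g)=g$, $S(x)=-x(p_+\pm ip_-)$, and $\alpha=g$, $\beta=1$. Its modular element $\mu$ satisfies $\mu(g)=-1$, $\mu(x)=0$. General definitions, for a finite dimensional quasi-Hopf algebra $(H,\Delta,\varepsilon,\Phi,S,\alpha,\beta)$ (axioms of Drinfeld: $(\mathrm{Id}\otimes\Delta)\Delta(h)=\Phi(\Delta\otimes\mathrm{Id})\Delta(h)\Phi^{-1}$, counit axioms, 3-cocycle condition for $\Phi$, $(\mathrm{Id}\otimes\varepsilon\otimes\mathrm{Id})(\Phi)=1\otimes1$, $S(h_1)\alpha h_2=\varepsilon(h)\alpha$,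 $h_1\beta S(h_2)=\varepsilon(h)\beta$, $X^1\beta S(X^2)\alpha X^3=1=S(x^1)\alpha x^2\beta S(x^3)$), with $\Delta(h)=h_1\otimes h_2$, $\Phi=X^1\otimes X^2\otimes X^3$, $\Phi^{-1}=x^1\otimes x^2\otimes x^3$: $\gamma=S(x^1X^2)\alpha x^2X^3_1\otimes S(X^1)\alpha x^3X^3_2$; $\delta=X^1_1x^1\beta S(X^3)\otimes X^1_2x^2\beta S(X^2x^3)$; $f=f^1\otimes f^2=(S\otimes S)(\Delta^{\rm op}(x^1))\gamma\Delta(x^2\beta S(x^3))$ with inverse $f^{-1}=g^1\otimes g^2=\Delta(S(x^1)\alpha x^2)\delta(S\otimes S)(\Delta^{\rm cop}(x^3))$; $p_R=p^1\otimes p^2=x^1\otimes x^2\beta S(x^3)$; $q_R=q^1\otimes q^2=X^1\otimes S^{-1}(\alpha X^3)X^2$; $p_L=\tilde p^1\otimes\tilde p^2=X^2S^{-1}(X^1\beta)\otimes X^3$; $q_L=\tilde q^1\otimes\tilde q^2=S(x^1)\alpha x^2\otimes x^3$; $U=g^1S(q^2)\otimes g^2S(q^1)$, $V=S^{-1}(f^2p^2)\otimes S^{-1}(f^1p^1)$. Left integrals: $ht=\varepsilon(h)t$ for all $h$. $\mu\in H^*$ is the algebra map with $th=\mu(h)t$ for left integrals $t$. A left cointegral is $\lambda\in H^*$ with $\lambda(V^2h_2U^2)V^1h_1U^1=\mu(x^1)\lambda(hS(x^2))x^3$ for all $h$; a right cointegral is $\Lambda\in H^*$ with $\Lambda(S(\tilde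 p^2)f^1h_1S^{-1}(\tilde q^2g^2))S(\tilde p^1)f^2h_2S^{-1}(\tilde q^1g^1)=\mu(X^3)\Lambda(hS^{-1}(X^2))X^1$ for all $h$. The modular element of $H$: for a non-zero left integral $t$ and the unique left cointegral $\lambda$ with $\lambda(S^{-1}(t))=1$, $\underline g=\lambda(S^{-1}(q^2t_2p^2))S^{-1}(q^1t_1p^1)$. *)

theory Defs
  imports Main
begin

text \<open>Concrete model of the 8-dimensional quasi-Hopf algebra H(8), with parameter
  j standing for the root of unity written "plus-or-minus i" in the paper.
  The basis element g^a x^b is indexed by the pair (a,b) in Bs.  A linear functional
  on H is given by its values on the basis, i.e. by its coordinates in the
  dual basis P_{g^a x^b}.\<close>

type_synonym idx = "nat \<times> nat"
type_synonym 'k H1 = "idx \<Rightarrow> 'k"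
type_synonym 'k H2 = "idx \<times> idx \<Rightarrow> 'k"
type_synonym 'k H3 = "idx \<times> idx \<times> idx \<Rightarrow> 'k"

definition Bs :: "idx set" where "Bs = {0..1} \<times> {0..3}"

definition Hsp :: "('k::zero) H1 set" where
  "Hsp = {u. \<forall>r. r \<notin> Bs \<longrightarrow> u r = 0}"

definition H3sp :: "('k::zero) H3 set" where
  "H3sp = {w. \<forall>r. r \<notin> Bs \<times> Bs \<times> Bs \<longrightarrow> w r = 0}"

definition eb :: "idx \<Rightarrow> ('k::field) H1" where
  "eb p = (\<lambda>q. if q = p then 1 else 0)"

definition hadd :: "('a \<Rightarrow> 'k::field) \<Rightarrow> ('a \<Rightarrow> 'k) \<Rightarrow> 'a \<Rightarrow> 'k" where
  "hadd u v = (\<lambda>r. u r + v r)"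

definition hsmul :: "'k::field \<Rightarrow> ('a \<Rightarrow> 'k) \<Rightarrow> 'a \<Rightarrow> 'k" where
  "hsmul c u = (\<lambda>r. c * u r)"

text \<open>Product of basis elements: g^a x^b g^c x^d = (-1)^(bc) g^(a+c) x^(b+d), x^4 = 0.\<close>
definition bm :: "idx \<Rightarrow> idx \<Rightarrow> ('k::field) H1" where
  "bm p q = (if snd p + snd q < 4
     then hsmul ((-1) ^ (snd p * fst q)) (eb ((fst p + fst q) mod 2, snd p + snd q))
     else (\<lambda>_. 0))"

definition hmul :: "('k::field) H1 \<Rightarrow> 'k H1 \<Rightarrow> 'k H1" where
  "hmul u v = (\<lambda>r. \<Sum>p\<in>Bs. \<Sum>q\<in>Bs. u p * v q * bm p q r)"

definition hmul2 :: "('k::field) H2 \<Rightarrow> 'k H2 \<Rightarrow> 'k H2" where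
  "hmul2 w z = (\<lambda>(r1, r2). \<Sum>(p1, p2)\<in>Bs \<times> Bs. \<Sum>(q1, q2)\<in>Bs \<times> Bs.
      w (p1, p2) * z (q1, q2) * bm p1 q1 r1 * bm p2 q2 r2)"

definition hmul3 :: "('k::field) H3 \<Rightarrow> 'k H3 \<Rightarrow> 'k H3" where
  "hmul3 w z = (\<lambda>(r1, r2, r3). \<Sum>(p1, p2, p3)\<in>Bs \<times> Bs \<times> Bs. \<Sum>(q1, q2, q3)\<in>Bs \<times> Bs \<times> Bs.
      w (p1, p2, p3) * z (q1, q2, q3) * bm p1 q1 r1 * bm p2 q2 r2 * bm p3 q3 r3)"

definition tens2 :: "('k::field) H1 \<Rightarrow> 'k H1 \<Rightarrow> 'k H2" where
  "tens2 u v = (\<lambda>(p, q). u p * v q)"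

definition tens3 :: "('k::field) H1 \<Rightarrow> 'k H1 \<Rightarrow> 'k H1 \<Rightarrow> 'k H3" where
  "tens3 u v w = (\<lambda>(p, q, r). u p * v q * w r)"

definition flip2 :: "('k::field) H2 \<Rightarrow> 'k H2" where
  "flip2 w = (\<lambda>(p, q). w (q, p))"

definition one1 :: "('k::field) H1" where "one1 = eb (0, 0)"
definition gel :: "('k::field) H1" where "gel = eb (1, 0)"
definition xel :: "('k::field) H1" where "xel = eb (0, 1)"
definition one2 :: "('k::field) H2" where "one2 = tens2 one1 one1"
definition one3 :: "('k::field) H3" where "one3 = tens3 one1 one1 one1"

definition pplus :: "('k::field) H1" where "pplus = hsmul (1/2) (hadd one1 gel)"
definition pminus :: "('k::field) H1" where "pminus = hsmul (1/2) (hadd one1 (hsmul (-1) gel))"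

definition linext :: "(idx \<Rightarrow> 'a \<Rightarrow> 'k::field) \<Rightarrow> 'k H1 \<Rightarrow> 'a \<Rightarrow> 'k" where
  "linext f u = (\<lambda>r. \<Sum>p\<in>Bs. u p * f p r)"

text \<open>Comultiplication: algebra map with Delta(g) = g@g and the given Delta(x).\<close>
definition Dg :: "('k::field) H2" where "Dg = tens2 gel gel"
definition Dx :: "'k::field \<Rightarrow> 'k H2" where
  "Dx j = hadd (hadd (tens2 xel (hadd pplus (hsmul j pminus)))
                     (tens2 one1 (hmul pplus xel)))
               (tens2 gel (hmul pminus xel))"
definition Dbasis :: "'k::field \<Rightarrow> idx \<Rightarrow> 'k H2" where
  "Dbasis j p = hmul2 ((hmul2 Dg ^^ fst p) one2) ((hmul2 (Dx j) ^^ snd p) one2)"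
definition Delta :: "'k::field \<Rightarrow> 'k H1 \<Rightarrow> 'k H2" where
  "Delta j = linext (Dbasis j)"

text \<open>Antipode: anti-algebra map with S(g) = g, S(x) = -x(p_+ + j p_-).\<close>
definition Sx :: "'k::field \<Rightarrow> 'k H1" where
  "Sx j = hsmul (-1) (hmul xel (hadd pplus (hsmul j pminus)))"
definition Sbasis :: "'k::field \<Rightarrow> idx \<Rightarrow> 'k H1" where
  "Sbasis j p = hmul ((hmul (Sx j) ^^ snd p) one1) ((hmul gel ^^ fst p) one1)"
definition Santi :: "'k::field \<Rightarrow> 'k H1 \<Rightarrow> 'k H1" where
  "Santi j = linext (Sbasis j)"
definition Sinv :: "'k::field \<Rightarrow> 'k H1 \<Rightarrow> 'k H1" where
  "Sinv j h = (THE y. y \<in> Hsp \<and> Santi j y = h)"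

definition SS2 :: "'k::field \<Rightarrow> 'k H2 \<Rightarrow> 'k H2" where
  "SS2 j w = (\<lambda>(r1, r2). \<Sum>(p, q)\<in>Bs \<times> Bs. w (p, q) * Santi j (eb p) r1 * Santi j (eb q) r2)"
definition SinvSinv2 :: "'k::field \<Rightarrow> 'k H2 \<Rightarrow> 'k H2" where
  "SinvSinv2 j w = (\<lambda>(r1, r2). \<Sum>(p, q)\<in>Bs \<times> Bs. w (p, q) * Sinv j (eb p) r1 * Sinv j (eb q) r2)"

definition eps :: "('k::field) H1 \<Rightarrow> 'k" where
  "eps u = (\<Sum>p\<in>Bs. u p * (if snd p = 0 then 1 else 0))"
definition muv :: "('k::field) H1 \<Rightarrow> 'k" where
  "muv u = (\<Sum>p\<in>Bs. u p * (if snd p = 0 then (-1) ^ fst p else 0))"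
definition fev :: "('k::field) H1 \<Rightarrow> 'k H1 \<Rightarrow> 'k" where
  "fev l u = (\<Sum>p\<in>Bs. l p * u p)"
definition id_tens_fun :: "('k::field) H1 \<Rightarrow> 'k H2 \<Rightarrow> 'k H1" where
  "id_tens_fun l w = (\<lambda>r. \<Sum>b\<in>Bs. w (r, b) * l b)"
definition fun_tens_id :: "('k::field) H1 \<Rightarrow> 'k H2 \<Rightarrow> 'k H1" where
  "fun_tens_id l w = (\<lambda>r. \<Sum>a\<in>Bs. l a * w (a, r))"

definition Phi :: "('k::field) H3" where
  "Phi = hadd one3 (hsmul (-2) (tens3 pminus pminus pminus))"
definition Phiinv :: "('k::field) H3" where
  "Phiinv = (THE y. y \<in> H3sp \<and> hmul3 Phi y = one3 \<and> hmul3 y Phi = one3)"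
definition alpha :: "('k::field) H1" where "alpha = gel"
definition beta :: "('k::field) H1" where "beta = one1"

definition B3 :: "(idx \<times> idx \<times> idx) set" where "B3 = Bs \<times> Bs \<times> Bs"

definition gammaE :: "'k::field \<Rightarrow> 'k H2" where
  "gammaE j = (\<lambda>r. \<Sum>(p1, p2, p3)\<in>B3. \<Sum>(q1, q2, q3)\<in>B3.
     Phi (p1, p2, p3) * Phiinv (q1, q2, q3) *
     hmul2 (tens2 (hmul (hmul (Santi j (hmul (eb q1) (eb p2))) alpha) (eb q2))
                  (hmul (hmul (Santi j (eb p1)) alpha) (eb q3)))
           (Delta j (eb p3)) r)"

definition deltaE :: "'k::field \<Rightarrow> 'k H2" where
  "deltaE j = (\<lambda>r. \<Sum>(p1, p2, p3)\<in>B3. \<Sum>(q1, q2, q3)\<in>B3.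
     Phi (p1, p2, p3) * Phiinv (q1, q2, q3) *
     hmul2 (Delta j (eb p1))
           (tens2 (hmul (hmul (eb q1) beta) (Santi j (eb p3)))
                  (hmul (hmul (eb q2) beta) (Santi j (hmul (eb p2) (eb q3))))) r)"

definition fE :: "'k::field \<Rightarrow> 'k H2" where
  "fE j = (\<lambda>r. \<Sum>(q1, q2, q3)\<in>B3. Phiinv (q1, q2, q3) *
     hmul2 (hmul2 (SS2 j (flip2 (Delta j (eb q1)))) (gammaE j))
           (Delta j (hmul (hmul (eb q2) beta) (Santi j (eb q3)))) r)"

definition finvE :: "'k::field \<Rightarrow> 'k H2" where
  "finvE j = (\<lambda>r. \<Sum>(q1, q2, q3)\<in>B3. Phiinv (q1, q2, q3) *
     hmul2 (hmul2 (Delta j (hmul (hmul (Santi j (eb q1)) alpha) (eb q2))) (deltaE j))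
           (SS2 j (flip2 (Delta j (eb q3)))) r)"

definition pR :: "'k::field \<Rightarrow> 'k H2" where
  "pR j = (\<lambda>r. \<Sum>(q1, q2, q3)\<in>B3. Phiinv (q1, q2, q3) *
     tens2 (eb q1) (hmul (hmul (eb q2) beta) (Santi j (eb q3))) r)"
definition qR :: "'k::field \<Rightarrow> 'k H2" where
  "qR j = (\<lambda>r. \<Sum>(p1, p2, p3)\<in>B3. Phi (p1, p2, p3) *
     tens2 (eb p1) (hmul (Sinv j (hmul alpha (eb p3))) (eb p2)) r)"
definition pL :: "'k::field \<Rightarrow> 'k H2" where
  "pL j = (\<lambda>r. \<Sum>(p1, p2, p3)\<in>B3. Phi (p1, p2, p3) *
     tens2 (hmul (eb p2) (Sinv j (hmul (eb p1) beta))) (eb p3) r)"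
definition qL :: "'k::field \<Rightarrow> 'k H2" where
  "qL j = (\<lambda>r. \<Sum>(q1, q2, q3)\<in>B3. Phiinv (q1, q2, q3) *
     tens2 (hmul (hmul (Santi j (eb q1)) alpha) (eb q2)) (eb q3) r)"

text \<open>U = g^1 S(q^2) @ g^2 S(q^1);  V = S^-1(f^2 p^2) @ S^-1(f^1 p^1).\<close>
definition UU :: "'k::field \<Rightarrow> 'k H2" where
  "UU j = hmul2 (finvE j) (SS2 j (flip2 (qR j)))"
definition VV :: "'k::field \<Rightarrow> 'k H2" where
  "VV j = SinvSinv2 j (flip2 (hmul2 (fE j) (pR j)))"

definition is_left_int :: "('k::field) H1 \<Rightarrow> bool" where
  "is_left_int t \<longleftrightarrow> t \<in> Hsp \<and> (\<forall>h\<in>Hsp. hmul h t = hsmul (eps h) t)"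

text \<open>lambda(V^2 h_2 U^2) V^1 h_1 U^1 = mu(x^1) lambda(h S(x^2)) x^3.\<close>
definition is_left_coint :: "'k::field \<Rightarrow> 'k H1 \<Rightarrow> bool" where
  "is_left_coint j l \<longleftrightarrow> (\<forall>h\<in>Hsp.
     id_tens_fun l (hmul2 (hmul2 (VV j) (Delta j h)) (UU j)) =
     (\<lambda>r. \<Sum>(p1, p2, p3)\<in>B3. Phiinv (p1, p2, p3) * muv (eb p1) *
            fev l (hmul h (Santi j (eb p2))) * eb p3 r))"

text \<open>Lambda(S(p~^2) f^1 h_1 S^-1(q~^2 g^2)) S(p~^1) f^2 h_2 S^-1(q~^1 g^1)
  = mu(X^3) Lambda(h S^-1(X^2)) X^1.\<close>
definition is_right_coint :: "'k::field \<Rightarrow> 'k H1 \<Rightarrow> bool" where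
  "is_right_coint j L \<longleftrightarrow> (\<forall>h\<in>Hsp.
     fun_tens_id L (hmul2 (hmul2 (hmul2 (SS2 j (flip2 (pL j))) (fE j)) (Delta j h))
                          (SinvSinv2 j (flip2 (hmul2 (qL j) (finvE j))))) =
     (\<lambda>r. \<Sum>(p1, p2, p3)\<in>B3. Phi (p1, p2, p3) * muv (eb p3) *
            fev L (hmul h (Sinv j (eb p2))) * eb p1 r))"

text \<open>lambda(S^-1(q^2 t_2 p^2)) S^-1(q^1 t_1 p^1).\<close>
definition modg :: "'k::field \<Rightarrow> 'k H1 \<Rightarrow> 'k H1 \<Rightarrow> 'k H1" where
  "modg j t l = (\<lambda>r. \<Sum>(a, b)\<in>Bs \<times> Bs.
     hmul2 (hmul2 (qR j) (Delta j t)) (pR j) (a, b) * fev l (Sinv j (eb b)) * Sinv j (eb a) r)"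

end

theory Submission
  imports Defs
begin


type_synonym cq = "int \<times> int \<times> nat"

fun cadd :: "cq \<Rightarrow> cq \<Rightarrow> cq" where
  "cadd (a,b,n) (c,d,m) = (if n \<le> m then (a*2^(m-n)+c, b*2^(m-n)+d, m)
                            else (a + c*2^(n-m), b + d*2^(n-m), n))"
fun cmul :: "cq \<Rightarrow> cq \<Rightarrow> cq" where "cmul (a,b,n) (c,d,m) = (a*c - b*d, a*d+b*c, n+m)"
function cred :: "cq \<Rightarrow> cq" where
  "cred (a,b,n) = (if 0 < n \<and> even a \<and> even b then cred (a div 2, b div 2, n - 1) else (a,b,n))"
  by pat_completeness auto
termination by (relation "measure (\<lambda>(a,b,n). n)") auto
declare cred.simps[simp del]
fun cz :: "cq \<Rightarrow> bool" where "cz (a,b,n) = (a = 0 \<and> b = 0)"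

fun ins :: "'i \<times> cq \<Rightarrow> ('i \<times> cq) list \<Rightarrow> ('i \<times> cq) list" where
  "ins (k,c) [] = (if cz c then [] else [(k, cred c)])"
| "ins (k,c) ((l,d)#xs) = (if k = l then (if cz (cadd c d) then xs else (l, cred (cadd c d))#xs)
                           else (l,d) # ins (k,c) xs)"

definition addl :: "('i \<times> cq) list \<Rightarrow> ('i \<times> cq) list \<Rightarrow> ('i \<times> cq) list" where
  "addl A B = foldr ins A B"
definition lsc :: "cq \<Rightarrow> ('i \<times> cq) list \<Rightarrow> ('i \<times> cq) list" where
  "lsc c A = (if cz c then [] else map (\<lambda>(k,d). (k, cred (cmul c d))) A)"
definition lmap :: "('i \<Rightarrow> ('j \<times> cq) list) \<Rightarrow> ('i \<times> cq) list \<Rightarrow> ('j \<times> cq) list" where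
  "lmap f xs = foldr (\<lambda>(k,c) acc. addl (lsc c (f k)) acc) xs []"
definition lbil :: "('i \<Rightarrow> 'j \<Rightarrow> ('l \<times> cq) list) \<Rightarrow> ('i \<times> cq) list \<Rightarrow> ('j \<times> cq) list \<Rightarrow> ('l \<times> cq) list" where
  "lbil f xs ys = lmap (\<lambda>k. lmap (f k) ys) xs"
definition ltens :: "('i \<times> cq) list \<Rightarrow> ('j \<times> cq) list \<Rightarrow> (('i \<times> 'j) \<times> cq) list" where
  "ltens A B = concat (map (\<lambda>(k,c). map (\<lambda>(l,d). ((k,l), cmul c d)) B) A)"
definition lflip :: "(('i \<times> 'j) \<times> cq) list \<Rightarrow> (('j \<times> 'i) \<times> cq) list" where
  "lflip A = map (\<lambda>((p,q),c). ((q,p),c)) A"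

fun okl :: "'i set \<Rightarrow> ('i \<times> cq) list \<Rightarrow> bool" where
  "okl I [] = True"
| "okl I (x#xs) = (fst x \<in> I \<and> okl I xs)"

lemma okl_append[simp]: "okl I (A @ B) = (okl I A \<and> okl I B)"
  by (induction A) auto
lemma okl_ins: "okl I xs \<Longrightarrow> fst x \<in> I \<Longrightarrow> okl I (ins x xs)"
  by (induction x xs rule: ins.induct) auto
lemma okl_addl: "okl I A \<Longrightarrow> okl I B \<Longrightarrow> okl I (addl A B)"
  unfolding addl_def by (induction A) (auto intro: okl_ins)
lemma okl_lsc: "okl I A \<Longrightarrow> okl I (lsc c A)"
  unfolding lsc_def by (induction A) auto
lemma okl_lmap: "(\<And>k. okl J (f k)) \<Longrightarrow> okl J (lmap f xs)"
  unfolding lmap_def by (induction xs) (auto intro: okl_addl okl_lsc)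

definition dl :: "'i \<Rightarrow> 'i \<Rightarrow> 'k::field" where "dl k = (\<lambda>q. if q = k then 1 else 0)"

locale qh =
  fixes j :: "'k::field"
  assumes jj: "j * j = -1" and two: "(2::'k) \<noteq> 0"
begin

definition cv :: "cq \<Rightarrow> 'k" where
  "cv c = (case c of (a,b,n) \<Rightarrow> (of_int a + of_int b * j) / 2^n)"

lemma frac_aux: "(P::'k) \<noteq> 0 \<Longrightarrow> Q \<noteq> 0 \<Longrightarrow> (A*Q + C)/(Q*P) = A/P + C/(Q*P)"
  by (simp add: field_simps)

lemma cv_add: "cv (cadd x y) = cv x + cv y"
proof -
  obtain a b n c d m where x: "x = (a,b,n)" and y: "y = (c,d,m)" by (cases x, cases y) auto
  have t: "(2::'k)^k \<noteq> 0" for k using two by simp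
  show ?thesis
  proof (cases "n \<le> m")
    case True
    then have m: "(2::'k)^m = 2^(m-n) * 2^n" by (simp add: power_add[symmetric])
    have num: "of_int (a*2^(m-n)+c) + of_int (b*2^(m-n)+d)*j
       = (of_int a + of_int b*j) * (2::'k)^(m-n) + (of_int c + of_int d*j)"
      by (simp add: algebra_simps)
    show ?thesis using True unfolding x y cv_def
      by (simp only: cadd.simps if_True prod.case num m frac_aux[OF t t])
  next
    case False
    then have m: "(2::'k)^n = 2^(n-m) * 2^m" by (simp add: power_add[symmetric])
    have num: "of_int (a + c*2^(n-m)) + of_int (b + d*2^(n-m))*j
       = (of_int c + of_int d*j) * (2::'k)^(n-m) + (of_int a + of_int b*j)"
      by (simp add: algebra_simps)
    show ?thesis using False unfolding x y cv_def
      by (simp only: cadd.simps if_False prod.case num m frac_aux[OF t t]) (rule add.commute)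
  qed
qed

lemma cv_mul: "cv (cmul x y) = cv x * cv y"
proof -
  obtain a b n c d m where x: "x = (a,b,n)" and y: "y = (c,d,m)" by (cases x, cases y) auto
  have num: "of_int (a*c - b*d) + of_int (a*d+b*c) * j
       = (of_int a + of_int b * j) * (of_int c + of_int d * (j::'k))"
    using jj by (simp add: of_int_mult of_int_add of_int_diff) algebra
  show ?thesis unfolding x y cv_def
    by (simp only: cmul.simps prod.case num power_add times_divide_times_eq)
qed

lemma cv_cred: "cv (cred x) = cv x"
proof (induction x rule: cred.induct)
  case (1 a b n)
  have t: "(2::'k)^k \<noteq> 0" for k using two by simp
  show ?case
  proof (cases "0 < n \<and> even a \<and> even b")
    case True
    then obtain a' where a: "a = 2*a'" by (meson evenE)
    from True obtain b' where b: "b = 2*b'" by (meson evenE)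
    from True obtain n' where n: "n = Suc n'" by (cases n) auto
    have "cred (a,b,n) = cred (a div 2, b div 2, n - 1)"
      using True by (subst cred.simps) simp
    then have "cv (cred (a,b,n)) = cv (a div 2, b div 2, n - 1)"
      using 1 True by simp
    also have "\<dots> = cv (a,b,n)" unfolding cv_def a b n using two
      by (simp add: field_simps)
    finally show ?thesis .
  next
    case False
    then have "cred (a,b,n) = (a,b,n)" by (subst cred.simps) (simp only: if_False)
    then show ?thesis by simp
  qed
qed

lemma cv_cz: "cz x \<Longrightarrow> cv x = 0"
  by (cases x) (auto simp: cv_def)

definition vv :: "('i \<times> cq) list \<Rightarrow> 'i \<Rightarrow> 'k" where
  "vv xs = (\<lambda>r. sum_list (map (\<lambda>(k,c). if r = k then cv c else 0) xs))"

lemma vv_Nil: "vv [] = (\<lambda>_. 0)" by (simp add: vv_def)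
lemma vv_Cons: "vv ((k,c)#xs) = (\<lambda>r. (if r = k then cv c else 0) + vv xs r)"
  by (simp add: vv_def)
lemma vv_Nil_app: "vv [] r = 0" by (simp add: vv_def)
lemma vv_Cons_app: "vv ((k,c)#xs) r = (if r = k then cv c else 0) + vv xs r"
  by (simp add: vv_def)

lemma cz_cadd: "cz (cadd c d) \<Longrightarrow> cv c + cv d = 0"
  using cv_cz[of "cadd c d"] by (simp only: cv_add)

lemma vv_ins: "vv (ins x xs) r = vv [x] r + vv xs r"
proof (induction x xs rule: ins.induct)
  case (1 k c) then show ?case by (auto simp: vv_Cons_app vv_Nil_app cv_cred cv_cz)
next
  case (2 k c l d xs)
  show ?case
  proof (cases "k = l")
    case True
    then show ?thesis using cz_cadd[of c d]
      by (simp add: vv_Cons_app vv_Nil_app cv_cred cv_add del: cadd.simps cz.simps)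
  next
    case False
    then show ?thesis using 2 by (simp add: vv_Cons_app vv_Nil_app)
  qed
qed

lemma vv_addl: "vv (addl A B) r = vv A r + vv B r"
  unfolding addl_def
  by (induction A) (auto simp: vv_ins vv_Cons_app vv_Nil_app)

lemma vv_lsc: "vv (lsc c A) r = cv c * vv A r"
  unfolding lsc_def
  by (induction A) (auto simp: vv_Cons_app vv_Nil_app cv_cred cv_mul cv_cz distrib_left)

lemma vv_append: "vv (A @ B) r = vv A r + vv B r"
  by (induction A) (auto simp: vv_Cons_app vv_Nil_app)

lemma vv_ltens: "vv (ltens A B) (k,l) = vv A k * vv B l"
  unfolding ltens_def
proof (induction A)
  case Nil then show ?case by (simp add: vv_Nil_app)
next
  case (Cons x A)
  obtain k' c where x: "x = (k',c)" by (cases x)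
  have "vv (map (\<lambda>(l', d). ((k', l'), cmul c d)) B) (k,l) = (if k = k' then cv c else 0) * vv B l"
    by (induction B) (auto simp: vv_Cons_app vv_Nil_app cv_mul distrib_left)
  then show ?case using Cons by (simp add: x vv_append vv_Cons_app distrib_right)
qed

lemma vv_lflip: "vv (lflip A) (p,q) = vv A (q,p)"
  unfolding lflip_def by (induction A) (auto simp: vv_Cons_app vv_Nil_app)

lemma vv_dl: "vv [(k,c)] = hsmul (cv c) (dl k)"
  by (auto simp: vv_Cons vv_Nil hsmul_def dl_def)

lemma vv_Cons_h: "vv ((k,c)#xs) = hadd (hsmul (cv c) (dl k)) (vv xs)"
  by (auto simp: vv_Cons hsmul_def dl_def hadd_def)

lemma lin_vv:
  fixes op :: "('i \<Rightarrow> 'k) \<Rightarrow> ('j \<Rightarrow> 'k)"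
  assumes add: "\<And>u v. op (hadd u v) = hadd (op u) (op v)"
    and sm: "\<And>c u. op (hsmul c u) = hsmul c (op u)"
    and z: "op (\<lambda>_. 0) = (\<lambda>_. 0)"
    and bas: "\<And>k. k \<in> I \<Longrightarrow> op (dl k) = vv (f k)"
    and ok: "okl I xs"
  shows "op (vv xs) = vv (lmap f xs)"
  using ok
proof (induction xs)
  case Nil then show ?case by (simp add: vv_Nil z lmap_def)
next
  case (Cons x xs)
  obtain k c where x: "x = (k,c)" by (cases x)
  have "lmap f (x#xs) = addl (lsc c (f k)) (lmap f xs)" by (simp add: lmap_def x)
  have "op (vv (x#xs)) = hadd (hsmul (cv c) (vv (f k))) (vv (lmap f xs))"
    using Cons by (simp add: x vv_Cons_h add sm bas)
  also have "\<dots> = vv (lmap f (x#xs))"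
    by (rule ext) (simp add: \<open>lmap f (x#xs) = _\<close> vv_addl vv_lsc hadd_def hsmul_def)
  finally show ?case .
qed

definition lsum :: "('i \<Rightarrow> 'k) \<Rightarrow> ('i \<times> cq) list \<Rightarrow> 'k" where
  "lsum g xs = foldr (\<lambda>(k,c) acc. cv c * g k + acc) xs 0"

lemma lsum_Nil: "lsum g [] = 0" by (simp add: lsum_def)
lemma lsum_Cons: "lsum g ((k,c)#xs) = cv c * g k + lsum g xs" by (simp add: lsum_def)

lemma fun_vv:
  fixes phi :: "('i \<Rightarrow> 'k) \<Rightarrow> 'k"
  assumes add: "\<And>u v. phi (hadd u v) = phi u + phi v"
    and sm: "\<And>c u. phi (hsmul c u) = c * phi u"
    and z: "phi (\<lambda>_. 0) = 0"
    and bas: "\<And>k. k \<in> I \<Longrightarrow> phi (dl k) = g k"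
    and ok: "okl I xs"
  shows "phi (vv xs) = lsum g xs"
  using ok
proof (induction xs)
  case Nil then show ?case by (simp add: vv_Nil z lsum_def)
next
  case (Cons x xs)
  obtain k c where x: "x = (k,c)" by (cases x)
  then show ?case using Cons
    by (auto simp: x vv_Cons_h add sm bas lsum_Cons)
qed

lemma sum_vv:
  assumes "okl I xs" "finite I"
  shows "(\<Sum>x\<in>I. vv xs x * G x) = lsum G xs"
  using assms
proof (induction xs)
  case Nil then show ?case by (simp add: vv_Nil_app lsum_Nil)
next
  case (Cons x xs)
  obtain k c where x: "x = (k,c)" by (cases x)
  have e: "vv (x#xs) y * G y = (if y = k then cv c * G y else 0) + vv xs y * G y" for y
    by (simp add: x vv_Cons_app distrib_right)
  have "(\<Sum>y\<in>I. vv (x#xs) y * G y) = (\<Sum>y\<in>I. (if y = k then cv c * G y else 0)) + (\<Sum>y\<in>I. vv xs y * G y)"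
    unfolding e by (simp add: sum.distrib)
  also have "(\<Sum>y\<in>I. (if y = k then cv c * G y else 0)) = cv c * G k"
    using Cons.prems by (simp add: x)
  finally show ?case using Cons by (simp add: x lsum_Cons)
qed

end


lemma Bs_mem[simp]: "((a,b) \<in> Bs) = (a \<le> 1 \<and> b \<le> 3)"
  by (auto simp: Bs_def)
lemma finite_Bs[simp]: "finite Bs" by (simp add: Bs_def)
lemma Bs_eq: "Bs = {(0,0),(0,1),(0,2),(0,3),(1,0),(1,1),(1,2),(1,3)}"
  by (auto simp: Bs_def)
lemma finite_B3[simp]: "finite B3" by (simp add: B3_def)

lemma eb_dl: "eb = dl" by (rule ext) (simp add: eb_def dl_def fun_eq_iff)

definition mb :: "idx \<Rightarrow> idx \<Rightarrow> (idx \<times> cq) list" where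
  "mb p q = (if snd p + snd q < 4 then [(((fst p + fst q) mod 2, snd p + snd q), ((-1)^(snd p * fst q), 0, 0))] else [])"

definition mb2 :: "idx \<times> idx \<Rightarrow> idx \<times> idx \<Rightarrow> ((idx \<times> idx) \<times> cq) list" where
  "mb2 k l = ltens (mb (fst k) (fst l)) (mb (snd k) (snd l))"

definition mb3 :: "idx \<times> idx \<times> idx \<Rightarrow> idx \<times> idx \<times> idx \<Rightarrow> ((idx \<times> idx \<times> idx) \<times> cq) list" where
  "mb3 k l = ltens (mb (fst k) (fst l)) (ltens (mb (fst (snd k)) (fst (snd l))) (mb (snd (snd k)) (snd (snd l))))"

lemma okl_map_fst: "okl I xs = (\<forall>x\<in>set xs. fst x \<in> I)" by (induction xs) auto

lemma okl_ltens: "okl I A \<Longrightarrow> okl J B \<Longrightarrow> okl (I \<times> J) (ltens A B)"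
  by (auto simp: okl_map_fst ltens_def)

lemma okl_mb: "okl Bs (mb p q)"
  by (auto simp: mb_def)

lemma sum_delta1: "finite A \<Longrightarrow> (\<Sum>x\<in>A. (if x = p then (1::'k::field) else 0) * F x) = (if p \<in> A then F p else 0)"
proof -
  have e: "(if x = p then (1::'k) else 0) * F x = (if x = p then F p else 0)" for x by simp
  assume "finite A" then show ?thesis by (simp only: e sum.delta)
qed

context qh
begin

lemma vv_out: "okl I A \<Longrightarrow> r \<notin> I \<Longrightarrow> vv A r = 0"
  by (induction A) (auto simp: vv_Cons_app vv_Nil_app)

lemma vv_Hsp: "okl Bs A \<Longrightarrow> vv A \<in> Hsp"
  by (auto simp: Hsp_def vv_out)

lemma vv_H3sp: "okl (Bs \<times> Bs \<times> Bs) A \<Longrightarrow> vv A \<in> H3sp"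
  by (auto simp: H3sp_def vv_out)

lemma bil_vv:
  fixes op :: "('i \<Rightarrow> 'k) \<Rightarrow> ('j \<Rightarrow> 'k) \<Rightarrow> ('l \<Rightarrow> 'k)"
  assumes add1: "\<And>u v w. op (hadd u v) w = hadd (op u w) (op v w)"
    and sm1: "\<And>c u w. op (hsmul c u) w = hsmul c (op u w)"
    and z1: "\<And>w. op (\<lambda>_. 0) w = (\<lambda>_. 0)"
    and add2: "\<And>u v w. op w (hadd u v) = hadd (op w u) (op w v)"
    and sm2: "\<And>c u w. op w (hsmul c u) = hsmul c (op w u)"
    and z2: "\<And>w. op w (\<lambda>_. 0) = (\<lambda>_. 0)"
    and bas: "\<And>k l. k \<in> I \<Longrightarrow> l \<in> J \<Longrightarrow> op (dl k) (dl l) = vv (f k l)"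
    and ok1: "okl I xs" and ok2: "okl J ys"
  shows "op (vv xs) (vv ys) = vv (lbil f xs ys)"
proof -
  have b1: "op (dl k) (vv ys) = vv (lmap (f k) ys)" if "k \<in> I" for k
    by (rule lin_vv[where I=J]) (auto simp: add2 sm2 z2 bas that ok2)
  show ?thesis unfolding lbil_def
    by (rule lin_vv[where op="\<lambda>u. op u (vv ys)" and I=I]) (auto simp: add1 sm1 z1 b1 ok1)
qed

lemma hmul_add1: "hmul (hadd u v) w = hadd (hmul u w) (hmul v w)"
  by (rule ext) (simp add: hmul_def hadd_def distrib_right sum.distrib)
lemma hmul_sm1: "hmul (hsmul c u) w = hsmul c (hmul u w)"
  by (rule ext) (simp add: hmul_def hsmul_def sum_distrib_left mult.assoc)
lemma hmul_z1: "hmul (\<lambda>_. 0) w = (\<lambda>_. 0)"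
  by (rule ext) (simp add: hmul_def)
lemma hmul_add2: "hmul w (hadd u v) = hadd (hmul w u) (hmul w v)"
  by (rule ext) (simp add: hmul_def hadd_def distrib_right distrib_left sum.distrib)
lemma hmul_sm2: "hmul w (hsmul c u) = hsmul c (hmul w u)"
  by (rule ext) (simp add: hmul_def hsmul_def sum_distrib_left mult.assoc mult.left_commute)
lemma hmul_z2: "hmul w (\<lambda>_. 0) = (\<lambda>_. 0)"
  by (rule ext) (simp add: hmul_def)

lemma bm_vv: "bm p q = vv (mb p q)"
  by (rule ext) (auto simp: bm_def mb_def vv_Cons_app vv_Nil_app cv_def hsmul_def eb_def)

lemma hmul_dl: "p \<in> Bs \<Longrightarrow> q \<in> Bs \<Longrightarrow> hmul (dl p) (dl q) = vv (mb p q)"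
proof (rule ext)
  fix r assume "p \<in> Bs" "q \<in> Bs"
  have "hmul (dl p) (dl q) r = (\<Sum>p'\<in>Bs. (if p' = p then 1 else 0) * (\<Sum>q'\<in>Bs. (if q' = q then 1 else 0) * bm p' q' r))"
    by (simp add: hmul_def dl_def sum_distrib_left mult.assoc)
  also have "\<dots> = (bm p q r :: 'k)" using \<open>p \<in> Bs\<close> \<open>q \<in> Bs\<close> by (simp add: sum_delta1)
  finally show "hmul (dl p) (dl q) r = vv (mb p q) r" by (simp only: bm_vv)
qed

lemma hmul_vv: "okl Bs A \<Longrightarrow> okl Bs B \<Longrightarrow> hmul (vv A) (vv B) = vv (lbil mb A B)"
  by (rule bil_vv[where I=Bs and J=Bs])
     (auto simp: hmul_add1 hmul_sm1 hmul_z1 hmul_add2 hmul_sm2 hmul_z2 hmul_dl)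

lemma hmul2_alt: "hmul2 w z = (\<lambda>r. \<Sum>x\<in>Bs\<times>Bs. \<Sum>y\<in>Bs\<times>Bs. w x * z y * bm (fst x) (fst y) (fst r) * bm (snd x) (snd y) (snd r))"
  by (rule ext) (simp add: hmul2_def split_def)

lemma hmul2_add1: "hmul2 (hadd u v) w = hadd (hmul2 u w) (hmul2 v w)"
  by (rule ext) (simp add: hmul2_alt hadd_def distrib_right sum.distrib)
lemma hmul2_sm1: "hmul2 (hsmul c u) w = hsmul c (hmul2 u w)"
  by (rule ext) (simp add: hmul2_alt hsmul_def sum_distrib_left mult.assoc)
lemma hmul2_z1: "hmul2 (\<lambda>_. 0) w = (\<lambda>_. 0)"
  by (rule ext) (simp add: hmul2_alt)
lemma hmul2_add2: "hmul2 w (hadd u v) = hadd (hmul2 w u) (hmul2 w v)"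
  by (rule ext) (simp add: hmul2_alt hadd_def distrib_right distrib_left sum.distrib)
lemma hmul2_sm2: "hmul2 w (hsmul c u) = hsmul c (hmul2 w u)"
  by (rule ext) (simp add: hmul2_alt hsmul_def sum_distrib_left mult.assoc mult.left_commute)
lemma hmul2_z2: "hmul2 w (\<lambda>_. 0) = (\<lambda>_. 0)"
  by (rule ext) (simp add: hmul2_alt)

lemma hmul2_dl: "p \<in> Bs \<times> Bs \<Longrightarrow> q \<in> Bs \<times> Bs \<Longrightarrow> hmul2 (dl p) (dl q) = vv (mb2 p q)"
proof (rule ext)
  fix r assume "p \<in> Bs \<times> Bs" "q \<in> Bs \<times> Bs"
  have "hmul2 (dl p) (dl q) r = (\<Sum>p'\<in>Bs\<times>Bs. (if p' = p then 1 else 0) * (\<Sum>q'\<in>Bs\<times>Bs. (if q' = q then 1 else 0) * (bm (fst p') (fst q') (fst r) * bm (snd p') (snd q') (snd r))))"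
    by (simp add: hmul2_alt dl_def sum_distrib_left mult.assoc)
  also have "\<dots> = (bm (fst p) (fst q) (fst r) * bm (snd p) (snd q) (snd r) :: 'k)"
    using \<open>p \<in> Bs \<times> Bs\<close> \<open>q \<in> Bs \<times> Bs\<close> by (simp add: sum_delta1)
  finally show "hmul2 (dl p) (dl q) r = vv (mb2 p q) r"
    by (cases r) (simp only: bm_vv mb2_def vv_ltens fst_conv snd_conv)
qed

lemma hmul2_vv: "okl (Bs\<times>Bs) A \<Longrightarrow> okl (Bs\<times>Bs) B \<Longrightarrow> hmul2 (vv A) (vv B) = vv (lbil mb2 A B)"
  by (rule bil_vv[where I="Bs\<times>Bs" and J="Bs\<times>Bs"])
     (auto simp: hmul2_add1 hmul2_sm1 hmul2_z1 hmul2_add2 hmul2_sm2 hmul2_z2 hmul2_dl)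

lemma hmul3_alt: "hmul3 w z = (\<lambda>r. \<Sum>x\<in>Bs\<times>Bs\<times>Bs. \<Sum>y\<in>Bs\<times>Bs\<times>Bs. w x * z y *
    (bm (fst x) (fst y) (fst r) * bm (fst (snd x)) (fst (snd y)) (fst (snd r)) * bm (snd (snd x)) (snd (snd y)) (snd (snd r))))"
  by (rule ext) (simp add: hmul3_def split_def mult.assoc)

lemma hmul3_add1: "hmul3 (hadd u v) w = hadd (hmul3 u w) (hmul3 v w)"
  by (rule ext) (simp add: hmul3_alt hadd_def distrib_right sum.distrib)
lemma hmul3_sm1: "hmul3 (hsmul c u) w = hsmul c (hmul3 u w)"
  by (rule ext) (simp add: hmul3_alt hsmul_def sum_distrib_left mult.assoc)
lemma hmul3_z1: "hmul3 (\<lambda>_. 0) w = (\<lambda>_. 0)"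
  by (rule ext) (simp add: hmul3_alt)
lemma hmul3_add2: "hmul3 w (hadd u v) = hadd (hmul3 w u) (hmul3 w v)"
  by (rule ext) (simp add: hmul3_alt hadd_def distrib_right distrib_left sum.distrib)
lemma hmul3_sm2: "hmul3 w (hsmul c u) = hsmul c (hmul3 w u)"
  by (rule ext) (simp add: hmul3_alt hsmul_def sum_distrib_left mult.assoc mult.left_commute)
lemma hmul3_z2: "hmul3 w (\<lambda>_. 0) = (\<lambda>_. 0)"
  by (rule ext) (simp add: hmul3_alt)

lemma hmul3_dl: "p \<in> Bs \<times> Bs \<times> Bs \<Longrightarrow> q \<in> Bs \<times> Bs \<times> Bs \<Longrightarrow> hmul3 (dl p) (dl q) = vv (mb3 p q)"
proof (rule ext)
  fix r assume "p \<in> Bs \<times> Bs \<times> Bs" "q \<in> Bs \<times> Bs \<times> Bs"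
  have "hmul3 (dl p) (dl q) r = (\<Sum>p'\<in>Bs\<times>Bs\<times>Bs. (if p' = p then 1 else 0) * (\<Sum>q'\<in>Bs\<times>Bs\<times>Bs. (if q' = q then 1 else 0) *
    (bm (fst p') (fst q') (fst r) * bm (fst (snd p')) (fst (snd q')) (fst (snd r)) * bm (snd (snd p')) (snd (snd q')) (snd (snd r)))))"
    by (simp add: hmul3_alt dl_def sum_distrib_left mult.assoc)
  also have "\<dots> = (bm (fst p) (fst q) (fst r) * bm (fst (snd p)) (fst (snd q)) (fst (snd r)) * bm (snd (snd p)) (snd (snd q)) (snd (snd r)) :: 'k)"
    using \<open>p \<in> _\<close> \<open>q \<in> _\<close> by (simp only: sum_delta1 finite_cartesian_product finite_Bs if_True)
  finally show "hmul3 (dl p) (dl q) r = vv (mb3 p q) r"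
    by (cases r) (simp only: bm_vv mb3_def vv_ltens fst_conv snd_conv mult.assoc)
qed

lemma hmul3_vv: "okl (Bs\<times>Bs\<times>Bs) A \<Longrightarrow> okl (Bs\<times>Bs\<times>Bs) B \<Longrightarrow> hmul3 (vv A) (vv B) = vv (lbil mb3 A B)"
  by (rule bil_vv[where I="Bs\<times>Bs\<times>Bs" and J="Bs\<times>Bs\<times>Bs"])
     (auto simp: hmul3_add1 hmul3_sm1 hmul3_z1 hmul3_add2 hmul3_sm2 hmul3_z2 hmul3_dl)

lemma tens2_vv: "tens2 (vv A) (vv B) = vv (ltens A B)"
  by (rule ext) (auto simp: tens2_def vv_ltens)
lemma tens3_vv: "tens3 (vv A) (vv B) (vv C) = vv (ltens A (ltens B C))"
  by (rule ext) (auto simp: tens3_def vv_ltens mult.assoc)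
lemma flip2_vv: "flip2 (vv A) = vv (lflip A)"
  by (rule ext) (auto simp: flip2_def vv_lflip)
lemma hadd_vv: "hadd (vv A) (vv B) = vv (addl A B)"
  by (rule ext) (simp add: hadd_def vv_addl)
lemma hsmul_vv: "hsmul (cv c) (vv A) = vv (lsc c A)"
  by (rule ext) (simp add: hsmul_def vv_lsc)
lemma eb_vv: "eb p = vv [(p, (1,0,0))]"
  by (rule ext) (simp add: eb_def vv_Cons_app vv_Nil_app cv_def)

lemma linext_add: "linext f (hadd u v) = hadd (linext f u) (linext f v)"
  by (rule ext) (simp add: linext_def hadd_def distrib_right sum.distrib)
lemma linext_sm: "linext f (hsmul c u) = hsmul c (linext f u)"
  by (rule ext) (simp add: linext_def hsmul_def sum_distrib_left mult.assoc)
lemma linext_z: "linext f (\<lambda>_. 0) = (\<lambda>_. 0)"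
  by (rule ext) (simp add: linext_def)
lemma linext_dl: "p \<in> Bs \<Longrightarrow> linext f (dl p) = f p"
  by (rule ext) (simp add: linext_def dl_def sum_delta1)
lemma linext_vv: "(\<And>p. p \<in> Bs \<Longrightarrow> f p = vv (g p)) \<Longrightarrow> okl Bs A \<Longrightarrow> linext f (vv A) = vv (lmap g A)"
  by (rule lin_vv[where I=Bs]) (auto simp: linext_add linext_sm linext_z linext_dl)

definition TT :: "(idx \<Rightarrow> 'k H1) \<Rightarrow> 'k H2 \<Rightarrow> 'k H2" where
  "TT F w = (\<lambda>r. \<Sum>x\<in>Bs\<times>Bs. w x * F (fst x) (fst r) * F (snd x) (snd r))"
lemma SS2_TT: "SS2 j = TT (\<lambda>p. Santi j (eb p))"
  by (rule ext, rule ext) (simp add: SS2_def TT_def split_def)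
lemma SinvSinv2_TT: "SinvSinv2 j = TT (\<lambda>p. Sinv j (eb p))"
  by (rule ext, rule ext) (simp add: SinvSinv2_def TT_def split_def)
lemma TT_vv: "(\<And>p. p \<in> Bs \<Longrightarrow> F p = vv (g p)) \<Longrightarrow> okl (Bs\<times>Bs) A \<Longrightarrow>
   TT F (vv A) = vv (lmap (\<lambda>k. ltens (g (fst k)) (g (snd k))) A)"
proof (rule lin_vv[where I="Bs\<times>Bs"])
  fix k :: "idx \<times> idx" assume F: "\<And>p. p \<in> Bs \<Longrightarrow> F p = vv (g p)" and k: "k \<in> Bs \<times> Bs"
  show "TT F (dl k) = vv (ltens (g (fst k)) (g (snd k)))"
  proof (rule ext)
    fix r :: "idx \<times> idx"
    have "TT F (dl k) r = (\<Sum>x\<in>Bs\<times>Bs. (if x = k then 1 else 0) * (F (fst x) (fst r) * F (snd x) (snd r)))"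
      by (simp add: TT_def dl_def mult.assoc)
    also have "\<dots> = F (fst k) (fst r) * F (snd k) (snd r)" using k by (simp add: sum_delta1)
    finally show "TT F (dl k) r = vv (ltens (g (fst k)) (g (snd k))) r"
      using k F by (cases r) (simp add: vv_ltens mem_Times_iff)
  qed
qed (auto simp: TT_def hadd_def hsmul_def distrib_right sum.distrib sum_distrib_left mult.assoc)

lemma eps_vv: "okl Bs A \<Longrightarrow> eps (vv A) = lsum (\<lambda>p. if snd p = 0 then 1 else 0) A"
  by (rule fun_vv[where I=Bs])
     (auto simp: eps_def hadd_def hsmul_def distrib_right sum.distrib sum_distrib_left mult.assoc dl_def sum_delta1)
lemma muv_vv: "okl Bs A \<Longrightarrow> muv (vv A) = lsum (\<lambda>p. if snd p = 0 then (-1)^fst p else 0) A"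
  by (rule fun_vv[where I=Bs])
     (auto simp: muv_def hadd_def hsmul_def distrib_right sum.distrib sum_distrib_left mult.assoc dl_def sum_delta1)
lemma fev_vv: "okl Bs A \<Longrightarrow> fev l (vv A) = lsum l A"
proof (rule fun_vv[where I=Bs])
  fix k assume "k \<in> Bs"
  then show "fev l (dl k) = l k"
    using sum_delta1[of Bs k l] by (simp add: fev_def dl_def mult.commute)
qed (auto simp: fev_def hadd_def hsmul_def distrib_left sum.distrib sum_distrib_left mult.left_commute)

lemma fun_tens_id_vv: "okl (Bs\<times>Bs) A \<Longrightarrow> fun_tens_id l (vv A) = (\<lambda>r. lsum (\<lambda>k. if snd k = r then l (fst k) else 0) A)"
proof (rule ext, rule fun_vv[where I="Bs\<times>Bs"])
  fix r k assume k: "k \<in> Bs \<times> Bs"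
  have "fun_tens_id l (dl k) r = (\<Sum>a\<in>Bs. (if a = fst k then 1 else 0) * (if r = snd k then l a else 0))"
    unfolding fun_tens_id_def by (rule sum.cong) (auto simp: dl_def prod_eq_iff)
  then show "fun_tens_id l (dl k) r = (if snd k = r then l (fst k) else 0)"
    using k by (auto simp: sum_delta1 mem_Times_iff)
qed (auto simp: fun_tens_id_def hadd_def hsmul_def distrib_left sum.distrib sum_distrib_left mult.left_commute)

lemma id_tens_fun_vv: "okl (Bs\<times>Bs) A \<Longrightarrow> id_tens_fun l (vv A) = (\<lambda>r. lsum (\<lambda>k. if fst k = r then l (snd k) else 0) A)"
proof (rule ext, rule fun_vv[where I="Bs\<times>Bs"])
  fix r k assume k: "k \<in> Bs \<times> Bs"
  have "id_tens_fun l (dl k) r = (\<Sum>b\<in>Bs. (if b = snd k then 1 else 0) * (if r = fst k then l b else 0))"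
    unfolding id_tens_fun_def by (rule sum.cong) (auto simp: dl_def prod_eq_iff)
  then show "id_tens_fun l (dl k) r = (if fst k = r then l (snd k) else 0)"
    using k by (auto simp: sum_delta1 mem_Times_iff)
qed (auto simp: id_tens_fun_def hadd_def hsmul_def distrib_right sum.distrib sum_distrib_left mult.assoc)

lemma linext_comp: "linext g (linext f y) = linext (\<lambda>q. linext g (f q)) y"
proof (rule ext)
  fix r
  have "linext g (linext f y) r = (\<Sum>p\<in>Bs. \<Sum>q\<in>Bs. y q * (f q p * g p r))"
    by (simp add: linext_def sum_distrib_right mult.assoc)
  also have "\<dots> = (\<Sum>q\<in>Bs. \<Sum>p\<in>Bs. y q * (f q p * g p r))" by (rule sum.swap)
  also have "\<dots> = linext (\<lambda>q. linext g (f q)) y r"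
    by (simp add: linext_def sum_distrib_left)
  finally show "linext g (linext f y) r = linext (\<lambda>q. linext g (f q)) y r" .
qed

lemma linext_cong: "(\<And>q. q \<in> Bs \<Longrightarrow> f q = f' q) \<Longrightarrow> linext f y = linext f' y"
  by (rule ext) (simp add: linext_def)

lemma linext_dl_id: "y \<in> Hsp \<Longrightarrow> linext dl y = y"
proof (rule ext)
  fix r assume y: "y \<in> Hsp"
  have "linext dl y r = (\<Sum>p\<in>Bs. (if p = r then 1 else 0) * y p)"
    unfolding linext_def by (rule sum.cong) (auto simp: dl_def)
  also have "\<dots> = (if r \<in> Bs then y r else 0)" by (simp only: sum_delta1 finite_Bs)
  also have "\<dots> = y r" using y unfolding Hsp_def by (cases r) auto
  finally show "linext dl y r = y r" .
qed

lemma linext_Hsp: "(\<And>p. p \<in> Bs \<Longrightarrow> f p \<in> Hsp) \<Longrightarrow> linext f y \<in> Hsp"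
  by (simp add: Hsp_def linext_def)

end


definition SBc :: "idx \<Rightarrow> (idx \<times> cq) list" where
  "SBc p = (if p = (0,0) then [((0,0),(1,0,0))]
    else if p = (0,1) then [((0,1),(-1,-1,1)), ((1,1),(1,-1,1))]
    else if p = (0,2) then [((0,2),(0,1,0))]
    else if p = (0,3) then [((0,3),(1,-1,1)), ((1,3),(1,1,1))]
    else if p = (1,0) then [((1,0),(1,0,0))]
    else if p = (1,1) then [((0,1),(-1,1,1)), ((1,1),(1,1,1))]
    else if p = (1,2) then [((1,2),(0,1,0))]
    else if p = (1,3) then [((0,3),(-1,-1,1)), ((1,3),(-1,1,1))]
    else [])"
definition SIc :: "idx \<Rightarrow> (idx \<times> cq) list" where
  "SIc p = (if p = (0,0) then [((0,0),(1,0,0))]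
    else if p = (0,1) then [((0,1),(-1,1,1)), ((1,1),(-1,-1,1))]
    else if p = (0,2) then [((0,2),(0,-1,0))]
    else if p = (0,3) then [((0,3),(1,1,1)), ((1,3),(-1,1,1))]
    else if p = (1,0) then [((1,0),(1,0,0))]
    else if p = (1,1) then [((0,1),(1,1,1)), ((1,1),(1,-1,1))]
    else if p = (1,2) then [((1,2),(0,-1,0))]
    else if p = (1,3) then [((0,3),(1,-1,1)), ((1,3),(-1,-1,1))]
    else [])"
definition DBc :: "idx \<Rightarrow> ((idx \<times> idx) \<times> cq) list" where
  "DBc p = (if p = (0,0) then [(((0,0),(0,0)),(1,0,0))]
    else if p = (0,1) then [(((0,0),(0,1)),(1,0,1)), (((0,0),(1,1)),(1,0,1)), (((0,1),(0,0)),(1,1,1)), (((0,1),(1,0)),(1,-1,1)), (((1,0),(0,1)),(1,0,1)), (((1,0),(1,1)),(-1,0,1))]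
    else if p = (0,2) then [(((0,1),(0,1)),(1,1,1)), (((0,1),(1,1)),(1,1,1)), (((0,2),(1,0)),(1,0,0)), (((1,0),(0,2)),(1,0,0)), (((1,1),(0,1)),(1,-1,1)), (((1,1),(1,1)),(-1,1,1))]
    else if p = (0,3) then [(((0,0),(0,3)),(1,0,1)), (((0,0),(1,3)),(-1,0,1)), (((0,2),(0,1)),(0,1,1)), (((0,2),(1,1)),(0,1,1)), (((0,3),(0,0)),(1,-1,1)), (((0,3),(1,0)),(1,1,1)), (((1,0),(0,3)),(1,0,1)), (((1,0),(1,3)),(1,0,1)), (((1,1),(0,2)),(1,-1,1)), (((1,1),(1,2)),(-1,-1,1)), (((1,2),(0,1)),(0,-1,1)), (((1,2),(1,1)),(0,1,1))]
    else if p = (1,0) then [(((1,0),(1,0)),(1,0,0))]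
    else if p = (1,1) then [(((0,0),(0,1)),(-1,0,1)), (((0,0),(1,1)),(1,0,1)), (((1,0),(0,1)),(1,0,1)), (((1,0),(1,1)),(1,0,1)), (((1,1),(0,0)),(1,-1,1)), (((1,1),(1,0)),(1,1,1))]
    else if p = (1,2) then [(((0,0),(1,2)),(1,0,0)), (((0,1),(0,1)),(-1,1,1)), (((0,1),(1,1)),(1,-1,1)), (((1,1),(0,1)),(1,1,1)), (((1,1),(1,1)),(1,1,1)), (((1,2),(0,0)),(1,0,0))]
    else if p = (1,3) then [(((0,0),(0,3)),(1,0,1)), (((0,0),(1,3)),(1,0,1)), (((0,1),(0,2)),(-1,-1,1)), (((0,1),(1,2)),(1,-1,1)), (((0,2),(0,1)),(0,1,1)), (((0,2),(1,1)),(0,-1,1)), (((1,0),(0,3)),(-1,0,1)), (((1,0),(1,3)),(1,0,1)), (((1,2),(0,1)),(0,1,1)), (((1,2),(1,1)),(0,1,1)), (((1,3),(0,0)),(1,1,1)), (((1,3),(1,0)),(1,-1,1))]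
    else [])"
definition PhiL :: "((idx \<times> idx \<times> idx) \<times> cq) list" where "PhiL = [(((0,0),(0,0),(0,0)),(3,0,2)), (((0,0),(0,0),(1,0)),(1,0,2)), (((0,0),(1,0),(0,0)),(1,0,2)), (((0,0),(1,0),(1,0)),(-1,0,2)), (((1,0),(0,0),(0,0)),(1,0,2)), (((1,0),(0,0),(1,0)),(-1,0,2)), (((1,0),(1,0),(0,0)),(-1,0,2)), (((1,0),(1,0),(1,0)),(1,0,2))]"

definition mulsc :: "('i \<Rightarrow> 'i \<Rightarrow> 'i \<Rightarrow> 'k::field) \<Rightarrow> 'i set \<Rightarrow> ('i \<Rightarrow> 'k) \<Rightarrow> ('i \<Rightarrow> 'k) \<Rightarrow> 'i \<Rightarrow> 'k" where
  "mulsc c A u v = (\<lambda>r. \<Sum>p\<in>A. \<Sum>q\<in>A. u p * v q * c p q r)"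

lemma mulsc_assoc:
  assumes h: "\<And>p q s r. p\<in>A \<Longrightarrow> q\<in>A \<Longrightarrow> s\<in>A \<Longrightarrow> (\<Sum>m\<in>A. c p q m * c m s r) = (\<Sum>m\<in>A. c q s m * c p m r)"
  shows "mulsc c A (mulsc c A u v) w = mulsc c A u (mulsc c A v w)"
proof (rule ext)
  fix r
  have "mulsc c A (mulsc c A u v) w r = (\<Sum>m\<in>A. \<Sum>s\<in>A. \<Sum>p\<in>A. \<Sum>q\<in>A. u p * v q * w s * (c p q m * c m s r))"
    unfolding mulsc_def by (simp only: sum_distrib_right) (intro sum.cong refl; simp add: mult_ac)
  also have "\<dots> = (\<Sum>m\<in>A. \<Sum>p\<in>A. \<Sum>s\<in>A. \<Sum>q\<in>A. u p * v q * w s * (c p q m * c m s r))"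
    by (rule sum.cong[OF refl], rule sum.swap)
  also have "\<dots> = (\<Sum>m\<in>A. \<Sum>p\<in>A. \<Sum>q\<in>A. \<Sum>s\<in>A. u p * v q * w s * (c p q m * c m s r))"
    by (rule sum.cong[OF refl], rule sum.cong[OF refl], rule sum.swap)
  also have "\<dots> = (\<Sum>p\<in>A. \<Sum>m\<in>A. \<Sum>q\<in>A. \<Sum>s\<in>A. u p * v q * w s * (c p q m * c m s r))"
    by (rule sum.swap)
  also have "\<dots> = (\<Sum>p\<in>A. \<Sum>q\<in>A. \<Sum>m\<in>A. \<Sum>s\<in>A. u p * v q * w s * (c p q m * c m s r))"
    by (rule sum.cong[OF refl], rule sum.swap)
  also have "\<dots> = (\<Sum>p\<in>A. \<Sum>q\<in>A. \<Sum>s\<in>A. \<Sum>m\<in>A. u p * v q * w s * (c p q m * c m s r))"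
    by (rule sum.cong[OF refl], rule sum.cong[OF refl], rule sum.swap)
  also have "\<dots> = (\<Sum>p\<in>A. \<Sum>q\<in>A. \<Sum>s\<in>A. u p * v q * w s * (\<Sum>m\<in>A. c p q m * c m s r))"
    by (simp add: sum_distrib_left)
  also have "\<dots> = (\<Sum>p\<in>A. \<Sum>q\<in>A. \<Sum>s\<in>A. u p * v q * w s * (\<Sum>m\<in>A. c q s m * c p m r))"
    by (intro sum.cong refl) (simp add: h)
  also have "\<dots> = (\<Sum>p\<in>A. \<Sum>q\<in>A. \<Sum>s\<in>A. \<Sum>m\<in>A. u p * v q * w s * (c q s m * c p m r))"
    by (simp add: sum_distrib_left)
  also have "\<dots> = (\<Sum>p\<in>A. \<Sum>q\<in>A. \<Sum>m\<in>A. \<Sum>s\<in>A. u p * v q * w s * (c q s m * c p m r))"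
    by (rule sum.cong[OF refl], rule sum.cong[OF refl], rule sum.swap)
  also have "\<dots> = (\<Sum>p\<in>A. \<Sum>m\<in>A. \<Sum>q\<in>A. \<Sum>s\<in>A. u p * v q * w s * (c q s m * c p m r))"
    by (rule sum.cong[OF refl], rule sum.swap)
  also have "\<dots> = mulsc c A u (mulsc c A v w) r"
    unfolding mulsc_def by (simp only: sum_distrib_right sum_distrib_left) (intro sum.cong refl; simp add: mult_ac)
  finally show "mulsc c A (mulsc c A u v) w r = mulsc c A u (mulsc c A v w) r" .
qed

lemma sum_prod3:
  fixes f :: "'a \<Rightarrow> 'd::comm_semiring_1"
  assumes "finite A" "finite B" "finite C"
  shows "(\<Sum>m\<in>A\<times>B\<times>C. f (fst m) * g (fst (snd m)) * h (snd (snd m))) = sum f A * sum g B * sum h C"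
proof -
  have "sum f A * sum g B * sum h C = (\<Sum>a\<in>A. \<Sum>b\<in>B. f a * g b) * sum h C"
    by (simp only: sum_product[of f A g B])
  also have "\<dots> = (\<Sum>a\<in>A. \<Sum>b\<in>B. f a * g b * sum h C)"
    by (simp only: sum_distrib_right)
  also have "\<dots> = (\<Sum>a\<in>A. \<Sum>b\<in>B. \<Sum>c\<in>C. f a * g b * h c)"
    by (simp only: sum_distrib_left)
  also have "\<dots> = (\<Sum>a\<in>A. \<Sum>x\<in>B\<times>C. f a * g (fst x) * h (snd x))"
    by (rule sum.cong[OF refl]) (simp add: sum.cartesian_product split_def)
  also have "\<dots> = (\<Sum>m\<in>A\<times>B\<times>C. f (fst m) * g (fst (snd m)) * h (snd (snd m)))"
    by (simp add: sum.cartesian_product split_def)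
  finally show ?thesis by simp
qed

definition c3 :: "idx \<times> idx \<times> idx \<Rightarrow> idx \<times> idx \<times> idx \<Rightarrow> idx \<times> idx \<times> idx \<Rightarrow> 'k::field" where
  "c3 x y r = bm (fst x) (fst y) (fst r) * bm (fst (snd x)) (fst (snd y)) (fst (snd r)) * bm (snd (snd x)) (snd (snd y)) (snd (snd r))"

lemma sum_bm:
  assumes "a \<in> Bs" "b \<in> Bs"
  shows "(\<Sum>m\<in>Bs. bm a b m * F m) = (if snd a + snd b < 4 then (-1)^(snd a * fst b) * F ((fst a + fst b) mod 2, snd a + snd b) else (0::'k::field))"
proof (cases "snd a + snd b < 4")
  case True
  have e: "bm a b m * F m = (-1)^(snd a * fst b) * ((if m = ((fst a + fst b) mod 2, snd a + snd b) then 1 else 0) * F m)" for m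
    using True by (simp add: bm_def hsmul_def eb_def)
  have "((fst a + fst b) mod 2, snd a + snd b) \<in> Bs" using True by simp
  then show ?thesis using True by (simp only: e sum_distrib_left[symmetric] sum_delta1 finite_Bs if_True)
next
  case False then show ?thesis by (simp add: bm_def)
qed

lemma m1sq: "((-1::'k::field)^n) * (-1)^n = 1"
  by (simp add: power_mult_distrib[symmetric])

lemma bm_assoc:
  assumes a: "a \<in> Bs" and b: "b \<in> Bs" and c: "c \<in> Bs"
  shows "(\<Sum>m\<in>Bs. bm a b m * bm m c r) = (\<Sum>m\<in>Bs. bm b c m * (bm a m r :: 'k::field))"
proof -
  obtain a1 a2 b1 b2 c1 c2 where ab: "a = (a1,a2)" "b = (b1,b2)" "c = (c1,c2)" by (cases a, cases b, cases c) auto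
  have b1: "b1 = 0 \<or> b1 = 1" and c1: "c1 = 0 \<or> c1 = 1" and a1: "a1 = 0 \<or> a1 = 1" using a b c ab by auto
  have "(\<Sum>m\<in>Bs. bm a b m * bm m c r) = (\<Sum>m\<in>Bs. bm a b m * (\<lambda>m. bm m c r) m)" by simp
  also have "\<dots> = (if a2 + b2 < 4 then (-1)^(a2 * b1) * bm ((a1 + b1) mod 2, a2 + b2) c r else 0)"
    using a b ab by (simp only: sum_bm) simp
  also have "\<dots> = (\<Sum>m\<in>Bs. bm b c m * (\<lambda>m. bm a m r) m)"
    using b c ab a1 b1 c1 by (simp only: sum_bm) (auto simp: bm_def hsmul_def eb_def algebra_simps power_add m1sq)
  finally show ?thesis by simp
qed

lemma c3_assoc:
  assumes "p \<in> Bs\<times>Bs\<times>Bs" "q \<in> Bs\<times>Bs\<times>Bs" "s \<in> Bs\<times>Bs\<times>Bs"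
  shows "(\<Sum>m\<in>Bs\<times>Bs\<times>Bs. c3 p q m * c3 m s r) = (\<Sum>m\<in>Bs\<times>Bs\<times>Bs. c3 q s m * (c3 p m r :: 'k::field))"
proof -
  have "(\<Sum>m\<in>Bs\<times>Bs\<times>Bs. c3 p q m * c3 m s r) =
    (\<Sum>m\<in>Bs\<times>Bs\<times>Bs. (\<lambda>m1. bm (fst p) (fst q) m1 * bm m1 (fst s) (fst r)) (fst m) *
        (\<lambda>m2. bm (fst (snd p)) (fst (snd q)) m2 * bm m2 (fst (snd s)) (fst (snd r))) (fst (snd m)) *
        (\<lambda>m3. bm (snd (snd p)) (snd (snd q)) m3 * bm m3 (snd (snd s)) (snd (snd r))) (snd (snd m)))"
    by (simp add: c3_def mult_ac)
  also have "\<dots> = (\<Sum>m1\<in>Bs. bm (fst p) (fst q) m1 * bm m1 (fst s) (fst r)) *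
        (\<Sum>m2\<in>Bs. bm (fst (snd p)) (fst (snd q)) m2 * bm m2 (fst (snd s)) (fst (snd r))) *
        (\<Sum>m3\<in>Bs. bm (snd (snd p)) (snd (snd q)) m3 * bm m3 (snd (snd s)) (snd (snd r)))"
    by (rule sum_prod3) simp_all
  also have "\<dots> = (\<Sum>m1\<in>Bs. bm (fst q) (fst s) m1 * bm (fst p) m1 (fst r)) *
        (\<Sum>m2\<in>Bs. bm (fst (snd q)) (fst (snd s)) m2 * bm (fst (snd p)) m2 (fst (snd r))) *
        (\<Sum>m3\<in>Bs. bm (snd (snd q)) (snd (snd s)) m3 * bm (snd (snd p)) m3 (snd (snd r)))"
    using assms by (simp add: bm_assoc mem_Times_iff)
  also have "\<dots> = (\<Sum>m\<in>Bs\<times>Bs\<times>Bs. (\<lambda>m1. bm (fst q) (fst s) m1 * bm (fst p) m1 (fst r)) (fst m) *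
        (\<lambda>m2. bm (fst (snd q)) (fst (snd s)) m2 * bm (fst (snd p)) m2 (fst (snd r))) (fst (snd m)) *
        (\<lambda>m3. bm (snd (snd q)) (snd (snd s)) m3 * bm (snd (snd p)) m3 (snd (snd r))) (snd (snd m)))"
    by (rule sum_prod3[symmetric]) simp_all
  also have "\<dots> = (\<Sum>m\<in>Bs\<times>Bs\<times>Bs. c3 q s m * c3 p m r)"
    by (simp add: c3_def mult_ac)
  finally show ?thesis .
qed

lemma hmul3_mulsc: "hmul3 w z = mulsc c3 (Bs\<times>Bs\<times>Bs) w z"
  by (rule ext) (simp add: hmul3_def mulsc_def c3_def split_def mult.assoc)

lemma hmul3_assoc: "hmul3 (hmul3 u v) w = hmul3 u (hmul3 v w)"
  unfolding hmul3_mulsc by (rule mulsc_assoc) (rule c3_assoc)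

named_theorems vvc

lemmas [vvc] = lbil_def lmap_def addl_def lsc_def ltens_def lflip_def mb_def mb2_def mb3_def
  ins.simps cadd.simps cmul.simps cred.simps cz.simps okl.simps

context qh begin

lemmas [vvc] = hmul_vv hmul2_vv hmul3_vv tens2_vv tens3_vv flip2_vv hadd_vv hsmul_vv

lemma hsmul_m1[vvc]: "hsmul (-1) u = hsmul (cv (-1,0,0)) u" by (simp add: cv_def)
lemma hsmul_m2[vvc]: "hsmul (-2) u = hsmul (cv (-2,0,0)) u" by (simp add: cv_def)
lemma hsmul_j: "hsmul j u = hsmul (cv (0,1,0)) u" by (simp add: cv_def)

lemma one1_vv[vvc]: "one1 = vv [((0,0),(1,0,0))]" by (simp add: one1_def eb_vv)
lemma gel_vv[vvc]: "gel = vv [((1,0),(1,0,0))]" by (simp add: gel_def eb_vv)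
lemma xel_vv[vvc]: "xel = vv [((0,1),(1,0,0))]" by (simp add: xel_def eb_vv)
lemma pplus_vv[vvc]: "pplus = vv [((0,0),(1,0,1)),((1,0),(1,0,1))]"
  by (rule ext) (simp add: pplus_def hsmul_def hadd_def one1_def gel_def eb_def vv_Cons_app vv_Nil_app cv_def)
lemma pminus_vv[vvc]: "pminus = vv [((0,0),(1,0,1)),((1,0),(-1,0,1))]"
  by (rule ext) (simp add: pminus_def hsmul_def hadd_def one1_def gel_def eb_def vv_Cons_app vv_Nil_app cv_def)

schematic_goal Dx_vv: "Dx j = vv ?L"
  unfolding Dx_def hsmul_j by (simp add: vvc)

schematic_goal Sx_vv: "Sx j = vv ?L"
  unfolding Sx_def hsmul_j by (simp add: vvc)

lemma one2_vv[vvc]: "one2 = vv [(((0,0),(0,0)),(1,0,0))]" by (simp add: one2_def vvc)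

lemma vv_trans: "X = vv A \<Longrightarrow> addl A (lsc (-1,0,0) B) = [] \<Longrightarrow> X = vv B"
proof -
  assume X: "X = vv A" and e: "addl A (lsc (-1,0,0) B) = []"
  have "vv A r = vv B r" for r
  proof -
    have "0 = vv (addl A (lsc (-1,0,0) B)) r" by (simp add: e vv_Nil_app)
    also have "\<dots> = vv A r - vv B r" by (simp add: vv_addl vv_lsc cv_def)
    finally show ?thesis by simp
  qed
  then show ?thesis using X by auto
qed

lemma pow_simps[vvc]: "(f ^^ 0) x = x" "(f ^^ 1) x = f x" "(f ^^ 2) x = f (f x)" "(f ^^ 3) x = f (f (f x))"
  by (simp_all add: numeral_2_eq_2 numeral_3_eq_3)
lemma SB00: "Sbasis j (0,0) = vv (SBc (0,0))"
  by (rule vv_trans) (simp add: Sbasis_def Sx_vv vvc SBc_def)+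
lemma SB01: "Sbasis j (0,1) = vv (SBc (0,1))"
  by (rule vv_trans) (simp add: Sbasis_def Sx_vv vvc SBc_def)+
lemma SB02: "Sbasis j (0,2) = vv (SBc (0,2))"
  by (rule vv_trans) (simp add: Sbasis_def Sx_vv vvc SBc_def)+
lemma SB03: "Sbasis j (0,3) = vv (SBc (0,3))"
  by (rule vv_trans) (simp add: Sbasis_def Sx_vv vvc SBc_def)+
lemma SB10: "Sbasis j (1,0) = vv (SBc (1,0))"
  by (rule vv_trans) (simp add: Sbasis_def Sx_vv vvc SBc_def)+
lemma SB11: "Sbasis j (1,1) = vv (SBc (1,1))"
  by (rule vv_trans) (simp add: Sbasis_def Sx_vv vvc SBc_def)+
lemma SB12: "Sbasis j (1,2) = vv (SBc (1,2))"
  by (rule vv_trans) (simp add: Sbasis_def Sx_vv vvc SBc_def)+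
lemma SB13: "Sbasis j (1,3) = vv (SBc (1,3))"
  by (rule vv_trans) (simp add: Sbasis_def Sx_vv vvc SBc_def)+
lemma DB00: "Dbasis j (0,0) = vv (DBc (0,0))"
  by (rule vv_trans) (simp add: Dbasis_def Dg_def Dx_vv vvc DBc_def)+
lemma DB01: "Dbasis j (0,1) = vv (DBc (0,1))"
  by (rule vv_trans) (simp add: Dbasis_def Dg_def Dx_vv vvc DBc_def)+
lemma DB02: "Dbasis j (0,2) = vv (DBc (0,2))"
  by (rule vv_trans) (simp add: Dbasis_def Dg_def Dx_vv vvc DBc_def)+
lemma DB03: "Dbasis j (0,3) = vv (DBc (0,3))"
  by (rule vv_trans) (simp add: Dbasis_def Dg_def Dx_vv vvc DBc_def)+
lemma DB10: "Dbasis j (1,0) = vv (DBc (1,0))"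
  by (rule vv_trans) (simp add: Dbasis_def Dg_def Dx_vv vvc DBc_def)+
lemma DB11: "Dbasis j (1,1) = vv (DBc (1,1))"
  by (rule vv_trans) (simp add: Dbasis_def Dg_def Dx_vv vvc DBc_def)+
lemma DB12: "Dbasis j (1,2) = vv (DBc (1,2))"
  by (rule vv_trans) (simp add: Dbasis_def Dg_def Dx_vv vvc DBc_def)+
lemma DB13: "Dbasis j (1,3) = vv (DBc (1,3))"
  by (rule vv_trans) (simp add: Dbasis_def Dg_def Dx_vv vvc DBc_def)+

lemma Sbasis_SBc: "p \<in> Bs \<Longrightarrow> Sbasis j p = vv (SBc p)"
  unfolding Bs_eq by (elim insertE emptyE) (simp_all only: SB00 SB01 SB02 SB03 SB10 SB11 SB12 SB13)
lemma Dbasis_DBc: "p \<in> Bs \<Longrightarrow> Dbasis j p = vv (DBc p)"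
  unfolding Bs_eq by (elim insertE emptyE) (simp_all only: DB00 DB01 DB02 DB03 DB10 DB11 DB12 DB13)

lemma okl_SBc: "okl Bs (SBc p)" by (simp add: SBc_def)
lemma okl_SIc: "okl Bs (SIc p)" by (simp add: SIc_def)
lemma okl_DBc: "okl (Bs\<times>Bs) (DBc p)" by (simp add: DBc_def)

lemma Santi_vv[vvc]: "okl Bs A \<Longrightarrow> Santi j (vv A) = vv (lmap SBc A)"
  unfolding Santi_def by (rule linext_vv) (auto simp: Sbasis_SBc)
lemma Delta_vv[vvc]: "okl Bs A \<Longrightarrow> Delta j (vv A) = vv (lmap DBc A)"
  unfolding Delta_def by (rule linext_vv) (auto simp: Dbasis_DBc)
lemma SI00: "Santi j (vv (SIc (0,0))) = dl (0,0)"
  unfolding eb_dl[symmetric] eb_vv by (rule vv_trans) (simp add: vvc SIc_def SBc_def)+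
lemma SI01: "Santi j (vv (SIc (0,1))) = dl (0,1)"
  unfolding eb_dl[symmetric] eb_vv by (rule vv_trans) (simp add: vvc SIc_def SBc_def)+
lemma SI02: "Santi j (vv (SIc (0,2))) = dl (0,2)"
  unfolding eb_dl[symmetric] eb_vv by (rule vv_trans) (simp add: vvc SIc_def SBc_def)+
lemma SI03: "Santi j (vv (SIc (0,3))) = dl (0,3)"
  unfolding eb_dl[symmetric] eb_vv by (rule vv_trans) (simp add: vvc SIc_def SBc_def)+
lemma SI10: "Santi j (vv (SIc (1,0))) = dl (1,0)"
  unfolding eb_dl[symmetric] eb_vv by (rule vv_trans) (simp add: vvc SIc_def SBc_def)+
lemma SI11: "Santi j (vv (SIc (1,1))) = dl (1,1)"
  unfolding eb_dl[symmetric] eb_vv by (rule vv_trans) (simp add: vvc SIc_def SBc_def)+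
lemma SI12: "Santi j (vv (SIc (1,2))) = dl (1,2)"
  unfolding eb_dl[symmetric] eb_vv by (rule vv_trans) (simp add: vvc SIc_def SBc_def)+
lemma SI13: "Santi j (vv (SIc (1,3))) = dl (1,3)"
  unfolding eb_dl[symmetric] eb_vv by (rule vv_trans) (simp add: vvc SIc_def SBc_def)+

lemma Santi_SIc: "p \<in> Bs \<Longrightarrow> Santi j (vv (SIc p)) = dl p"
  unfolding Bs_eq by (elim insertE emptyE) (simp_all only: SI00 SI01 SI02 SI03 SI10 SI11 SI12 SI13)

definition Tinv :: "'k H1 \<Rightarrow> 'k H1" where "Tinv = linext (\<lambda>p. vv (SIc p))"

lemma Santi_dl: "p \<in> Bs \<Longrightarrow> Santi j (dl p) = vv (SBc p)"
  unfolding Santi_def by (simp add: linext_dl Sbasis_SBc)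
lemma TS00: "Tinv (vv (SBc (0,0))) = dl (0,0)"
  unfolding eb_dl[symmetric] eb_vv Tinv_def by (rule vv_trans) (simp add: vvc SIc_def SBc_def linext_vv okl_SIc)+
lemma TS01: "Tinv (vv (SBc (0,1))) = dl (0,1)"
  unfolding eb_dl[symmetric] eb_vv Tinv_def by (rule vv_trans) (simp add: vvc SIc_def SBc_def linext_vv okl_SIc)+
lemma TS02: "Tinv (vv (SBc (0,2))) = dl (0,2)"
  unfolding eb_dl[symmetric] eb_vv Tinv_def by (rule vv_trans) (simp add: vvc SIc_def SBc_def linext_vv okl_SIc)+
lemma TS03: "Tinv (vv (SBc (0,3))) = dl (0,3)"
  unfolding eb_dl[symmetric] eb_vv Tinv_def by (rule vv_trans) (simp add: vvc SIc_def SBc_def linext_vv okl_SIc)+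
lemma TS10: "Tinv (vv (SBc (1,0))) = dl (1,0)"
  unfolding eb_dl[symmetric] eb_vv Tinv_def by (rule vv_trans) (simp add: vvc SIc_def SBc_def linext_vv okl_SIc)+
lemma TS11: "Tinv (vv (SBc (1,1))) = dl (1,1)"
  unfolding eb_dl[symmetric] eb_vv Tinv_def by (rule vv_trans) (simp add: vvc SIc_def SBc_def linext_vv okl_SIc)+
lemma TS12: "Tinv (vv (SBc (1,2))) = dl (1,2)"
  unfolding eb_dl[symmetric] eb_vv Tinv_def by (rule vv_trans) (simp add: vvc SIc_def SBc_def linext_vv okl_SIc)+
lemma TS13: "Tinv (vv (SBc (1,3))) = dl (1,3)"
  unfolding eb_dl[symmetric] eb_vv Tinv_def by (rule vv_trans) (simp add: vvc SIc_def SBc_def linext_vv okl_SIc)+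

lemma Tinv_SBc: "p \<in> Bs \<Longrightarrow> Tinv (vv (SBc p)) = dl p"
  unfolding Bs_eq by (elim insertE emptyE) (simp_all only: TS00 TS01 TS02 TS03 TS10 TS11 TS12 TS13)

lemma Sinv_eq: assumes h: "h \<in> Hsp" shows "Sinv j h = Tinv h"
  unfolding Sinv_def
proof (rule the_equality)
  show "Tinv h \<in> Hsp \<and> Santi j (Tinv h) = h"
  proof
    show "Tinv h \<in> Hsp" unfolding Tinv_def by (rule linext_Hsp) (simp add: vv_Hsp okl_SIc)
    have "Santi j (Tinv h) = linext (\<lambda>q. Santi j (vv (SIc q))) h"
      unfolding Tinv_def Santi_def by (rule linext_comp)
    also have "\<dots> = linext dl h" by (rule linext_cong) (simp add: Santi_SIc)
    also have "\<dots> = h" using h by (rule linext_dl_id)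
    finally show "Santi j (Tinv h) = h" .
  qed
next
  fix y assume y: "y \<in> Hsp \<and> Santi j y = h"
  have "y = linext dl y" using y by (simp add: linext_dl_id)
  also have "\<dots> = linext (\<lambda>q. Tinv (Sbasis j q)) y"
    by (rule linext_cong) (simp add: Sbasis_SBc Tinv_SBc)
  also have "\<dots> = Tinv (Santi j y)" unfolding Tinv_def Santi_def by (rule linext_comp[symmetric])
  finally show "y = Tinv h" using y by simp
qed

lemma Sinv_vv[vvc]: "okl Bs A \<Longrightarrow> Sinv j (vv A) = vv (lmap SIc A)"
  by (simp add: Sinv_eq vv_Hsp Tinv_def linext_vv)

lemma Sinv_dl: "p \<in> Bs \<Longrightarrow> Sinv j (dl p) = vv (SIc p)"
proof -
  assume p: "p \<in> Bs"
  have "(dl p :: 'k H1) \<in> Hsp" using p by (auto simp: Hsp_def dl_def)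
  then show ?thesis using p by (simp add: Sinv_eq Tinv_def linext_dl)
qed

lemma SS2_vv[vvc]: "okl (Bs\<times>Bs) A \<Longrightarrow> SS2 j (vv A) = vv (lmap (\<lambda>k. ltens (SBc (fst k)) (SBc (snd k))) A)"
  unfolding SS2_TT by (rule TT_vv) (simp_all add: eb_dl Santi_dl)

lemma SinvSinv2_vv[vvc]: "okl (Bs\<times>Bs) A \<Longrightarrow> SinvSinv2 j (vv A) = vv (lmap (\<lambda>k. ltens (SIc (fst k)) (SIc (snd k))) A)"
  unfolding SinvSinv2_TT by (rule TT_vv) (simp_all add: eb_dl Sinv_dl)

lemma one3_vv[vvc]: "one3 = vv [(((0,0),(0,0),(0,0)),(1,0,0))]" by (simp add: one3_def vvc)

lemma Phi_vv: "(Phi :: 'k H3) = vv PhiL"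
  unfolding Phi_def by (rule vv_trans) (simp add: vvc PhiL_def)+

lemma PhiPhi: "hmul3 Phi Phi = (one3 :: 'k H3)"
  unfolding Phi_vv one3_vv by (rule vv_trans) (simp add: vvc PhiL_def)+

lemma dl_ooo: "one3 = dl ((0,0),(0,0),(0,0))"
  by (rule ext) (simp add: one3_def tens3_def one1_def eb_def dl_def split_def prod_eq_iff)

lemma bm_unit_l: "q \<in> Bs \<Longrightarrow> bm (0,0) q r = (if r = q then 1 else 0)"
  by (cases q) (auto simp: bm_def hsmul_def eb_def)
lemma bm_unit_r: "q \<in> Bs \<Longrightarrow> bm q (0,0) r = (if r = q then 1 else 0)"
  by (cases q) (auto simp: bm_def hsmul_def eb_def)

lemma hmul3_unit_l: assumes z: "z \<in> H3sp" shows "hmul3 one3 z = z"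
proof (rule ext)
  fix r
  have "hmul3 one3 z r = (\<Sum>p\<in>Bs\<times>Bs\<times>Bs. (if p = ((0,0),(0,0),(0,0)) then 1 else 0) * (\<Sum>q\<in>Bs\<times>Bs\<times>Bs. z q * c3 p q r))"
    by (simp add: hmul3_mulsc mulsc_def dl_ooo dl_def sum_distrib_left mult.assoc)
  also have "\<dots> = (\<Sum>q\<in>Bs\<times>Bs\<times>Bs. z q * c3 ((0,0),(0,0),(0,0)) q r)" by (simp add: sum_delta1)
  also have "\<dots> = (\<Sum>q\<in>Bs\<times>Bs\<times>Bs. (if q = r then 1 else 0) * z q)"
    by (rule sum.cong) (auto simp: c3_def bm_unit_l mem_Times_iff prod_eq_iff)
  also have "\<dots> = z r"
  proof -
    have zr: "r \<notin> Bs\<times>Bs\<times>Bs \<Longrightarrow> z r = 0" using z unfolding H3sp_def by blast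
    show ?thesis by (simp only: sum_delta1 finite_Bs finite_cartesian_product) (simp add: zr)
  qed
  finally show "hmul3 one3 z r = z r" .
qed

lemma hmul3_unit_r: assumes z: "z \<in> H3sp" shows "hmul3 z one3 = z"
proof (rule ext)
  fix r
  have "hmul3 z one3 r = (\<Sum>p\<in>Bs\<times>Bs\<times>Bs. z p * (\<Sum>q\<in>Bs\<times>Bs\<times>Bs. (if q = ((0,0),(0,0),(0,0)) then 1 else 0) * c3 p q r))"
    by (simp add: hmul3_mulsc mulsc_def dl_ooo dl_def sum_distrib_left mult_ac)
  also have "\<dots> = (\<Sum>p\<in>Bs\<times>Bs\<times>Bs. z p * c3 p ((0,0),(0,0),(0,0)) r)" by (simp add: sum_delta1)
  also have "\<dots> = (\<Sum>p\<in>Bs\<times>Bs\<times>Bs. (if p = r then 1 else 0) * z p)"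
    by (rule sum.cong) (auto simp: c3_def bm_unit_r mem_Times_iff prod_eq_iff)
  also have "\<dots> = z r"
  proof -
    have zr: "r \<notin> Bs\<times>Bs\<times>Bs \<Longrightarrow> z r = 0" using z unfolding H3sp_def by blast
    show ?thesis by (simp only: sum_delta1 finite_Bs finite_cartesian_product) (simp add: zr)
  qed
  finally show "hmul3 z one3 r = z r" .
qed

lemma okl_PhiL: "okl (Bs\<times>Bs\<times>Bs) PhiL" by (simp add: PhiL_def)

lemma Phiinv_eq: "Phiinv = (Phi :: 'k H3)"
  unfolding Phiinv_def
proof (rule the_equality)
  have P: "(Phi :: 'k H3) \<in> H3sp" by (simp add: Phi_vv vv_H3sp okl_PhiL)
  then show "(Phi :: 'k H3) \<in> H3sp \<and> hmul3 Phi Phi = (one3 :: 'k H3) \<and> hmul3 Phi Phi = (one3 :: 'k H3)"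
    using PhiPhi by simp
next
  fix y assume y: "y \<in> H3sp \<and> hmul3 Phi y = one3 \<and> hmul3 y (Phi :: 'k H3) = one3"
  have P: "(Phi :: 'k H3) \<in> H3sp" by (simp add: Phi_vv vv_H3sp okl_PhiL)
  have "y = hmul3 y one3" using y by (simp add: hmul3_unit_r)
  also have "\<dots> = hmul3 (hmul3 y Phi) Phi" by (simp add: PhiPhi hmul3_assoc)
  also have "\<dots> = Phi" using y P by (simp add: hmul3_unit_l)
  finally show "y = Phi" .
qed

end


context qh begin

lemma alpha_vv[vvc]: "alpha = vv [((1,0),(1,0,0))]" by (simp add: alpha_def vvc)
lemma beta_vv[vvc]: "beta = vv [((0,0),(1,0,0))]" by (simp add: beta_def vvc)
lemmas [vvc] = eb_vv SBc_def SIc_def DBc_def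

definition padd :: "'k \<Rightarrow> 'k \<Rightarrow> 'k" where "padd x y = x + y"
definition lsumk :: "('i \<Rightarrow> 'k) \<Rightarrow> ('i \<times> cq) list \<Rightarrow> 'k" where
  "lsumk g xs = foldr (\<lambda>(k,c) acc. padd (cv c * g k) acc) xs 0"
lemma lsum_lsumk: "lsum = lsumk"
  by (rule ext, rule ext) (simp add: lsum_def lsumk_def padd_def)
lemma lsumk_Cons: "lsumk g ((k,c)#xs) = padd (cv c * g k) (lsumk g xs)" by (simp add: lsumk_def)
lemma lsumk_Nil: "lsumk g [] = 0" by (simp add: lsumk_def)
lemma padd1[vvc]: "padd (vv A r) (vv B r) = vv (addl A B) r" by (simp add: padd_def vv_addl)
lemma padd2[vvc]: "padd x 0 = x" by (simp add: padd_def)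

lemma comb1[vvc]: "cv c * vv L r = vv (lsc c L) r" by (simp add: vv_lsc)
lemma comb2: "vv A r + vv B r = vv (addl A B) r" by (simp add: vv_addl)
lemma comb3[vvc]: "cv c * (cv d * x) = cv (cmul c d) * x" by (simp add: cv_mul)
lemma comb4[vvc]: "cv c * cv d * x = cv (cmul c d) * x" by (simp add: cv_mul)

lemma sum3_vv:
  assumes "okl (Bs\<times>Bs\<times>Bs) A"
  shows "(\<Sum>(p1,p2,p3)\<in>B3. vv A (p1,p2,p3) * G p1 p2 p3) = lsum (\<lambda>(p1,p2,p3). G p1 p2 p3) A"
proof -
  have "(\<Sum>(p1,p2,p3)\<in>B3. vv A (p1,p2,p3) * G p1 p2 p3) = (\<Sum>x\<in>Bs\<times>Bs\<times>Bs. vv A x * (\<lambda>(p1,p2,p3). G p1 p2 p3) x)"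
    unfolding B3_def by (rule sum.cong) (auto simp: split_def)
  also have "\<dots> = lsum (\<lambda>(p1,p2,p3). G p1 p2 p3) A" using assms by (simp add: sum_vv)
  finally show ?thesis .
qed

lemma sum33_vv:
  assumes "okl (Bs\<times>Bs\<times>Bs) A" "okl (Bs\<times>Bs\<times>Bs) B"
  shows "(\<Sum>(p1,p2,p3)\<in>B3. \<Sum>(q1,q2,q3)\<in>B3. vv A (p1,p2,p3) * vv B (q1,q2,q3) * G p1 p2 p3 q1 q2 q3)
       = lsum (\<lambda>(p1,p2,p3). lsum (\<lambda>(q1,q2,q3). G p1 p2 p3 q1 q2 q3) B) A"
proof -
  have "(\<Sum>(p1,p2,p3)\<in>B3. \<Sum>(q1,q2,q3)\<in>B3. vv A (p1,p2,p3) * vv B (q1,q2,q3) * G p1 p2 p3 q1 q2 q3)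
     = (\<Sum>(p1,p2,p3)\<in>B3. vv A (p1,p2,p3) * (\<Sum>(q1,q2,q3)\<in>B3. vv B (q1,q2,q3) * G p1 p2 p3 q1 q2 q3))"
    by (simp add: split_def sum_distrib_left mult.assoc)
  also have "\<dots> = (\<Sum>(p1,p2,p3)\<in>B3. vv A (p1,p2,p3) * lsum (\<lambda>(q1,q2,q3). G p1 p2 p3 q1 q2 q3) B)"
    using assms(2) by (simp only: sum3_vv)
  also have "\<dots> = lsum (\<lambda>(p1,p2,p3). lsum (\<lambda>(q1,q2,q3). G p1 p2 p3 q1 q2 q3) B) A"
    using assms(1) by (rule sum3_vv)
  finally show ?thesis .
qed

lemma okl_PhiL': "okl (Bs\<times>Bs\<times>Bs) PhiL" by (simp add: PhiL_def)

schematic_goal gamma_vv: "gammaE j = vv ?L"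
  apply (rule ext)
  unfolding gammaE_def Phiinv_eq Phi_vv
  apply (simp only: sum33_vv okl_PhiL' lsum_lsumk)
  apply (simp add: vvc PhiL_def lsumk_Cons lsumk_Nil)
  done

schematic_goal delta_vv: "deltaE j = vv ?L"
  apply (rule ext)
  unfolding deltaE_def Phiinv_eq Phi_vv
  apply (simp only: sum33_vv okl_PhiL' lsum_lsumk)
  apply (simp add: vvc PhiL_def lsumk_Cons lsumk_Nil)
  done

schematic_goal f_vv: "fE j = vv ?L"
  apply (rule ext)
  unfolding fE_def Phiinv_eq Phi_vv gamma_vv
  apply (simp only: sum3_vv okl_PhiL' lsum_lsumk)
  apply (simp add: vvc PhiL_def lsumk_Cons lsumk_Nil)
  done

schematic_goal finv_vv: "finvE j = vv ?L"
  apply (rule ext)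
  unfolding finvE_def Phiinv_eq Phi_vv delta_vv
  apply (simp only: sum3_vv okl_PhiL' lsum_lsumk)
  apply (simp add: vvc PhiL_def lsumk_Cons lsumk_Nil)
  done

schematic_goal pR_vv: "pR j = vv ?L"
  apply (rule ext)
  unfolding pR_def Phiinv_eq Phi_vv
  apply (simp only: sum3_vv okl_PhiL' lsum_lsumk)
  apply (simp add: vvc PhiL_def lsumk_Cons lsumk_Nil)
  done

schematic_goal qR_vv: "qR j = vv ?L"
  apply (rule ext)
  unfolding qR_def Phi_vv
  apply (simp only: sum3_vv okl_PhiL' lsum_lsumk)
  apply (simp add: vvc PhiL_def lsumk_Cons lsumk_Nil)
  done

schematic_goal pL_vv: "pL j = vv ?L"
  apply (rule ext)
  unfolding pL_def Phi_vv
  apply (simp only: sum3_vv okl_PhiL' lsum_lsumk)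
  apply (simp add: vvc PhiL_def lsumk_Cons lsumk_Nil)
  done

schematic_goal qL_vv: "qL j = vv ?L"
  apply (rule ext)
  unfolding qL_def Phiinv_eq Phi_vv
  apply (simp only: sum3_vv okl_PhiL' lsum_lsumk)
  apply (simp add: vvc PhiL_def lsumk_Cons lsumk_Nil)
  done

schematic_goal UU_vv: "UU j = vv ?L"
  unfolding UU_def finv_vv qR_vv by (simp add: vvc)

schematic_goal VV_vv: "VV j = vv ?L"
  unfolding VV_def f_vv pR_vv by (simp add: vvc)

end


context qh begin

lemma four: "(4::'k) \<noteq> 0"
proof -
  have "(4::'k) = 2 * 2" by simp
  then show ?thesis using two by (simp only: mult_eq_0_iff) simp
qed
lemma one_m1: "(1::'k) \<noteq> -1"
proof
  assume "(1::'k) = -1"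
  then have "(1::'k) + 1 = 0" by (metis add.right_inverse)
  then show False using two by (simp only: one_add_one)
qed
lemma j_ne: "j \<noteq> 1" "j \<noteq> -1" "- j \<noteq> 1" "j \<noteq> 0"
proof -
  show "j \<noteq> 1" using jj one_m1 by auto
  show "j \<noteq> -1" using jj one_m1 by auto
  then show "- j \<noteq> 1" by (metis minus_minus)
  show "j \<noteq> 0" using jj by auto
qed
lemma sucs: "Suc 0 = 1" "Suc (Suc 0) = 2" "Suc (Suc (Suc 0)) = 3" by simp_all

lemma eb_Hsp: "p \<in> Bs \<Longrightarrow> (eb p :: 'k H1) \<in> Hsp"
  by (auto simp: Hsp_def eb_def)

named_theorems lfc

lemma lsum_ins: "lsum g (ins x xs) = lsum g [x] + lsum g xs"
proof (induction x xs rule: ins.induct)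
  case (1 k c) then show ?case by (auto simp: lsum_Cons lsum_Nil cv_cred cv_cz)
next
  case (2 k c l d xs)
  show ?case
  proof (cases "k = l")
    case True
    show ?thesis
    proof (cases "cz (cadd c d)")
      case z: True
      have "cv c * g l + cv d * g l = 0" using cz_cadd[OF z] by (simp add: distrib_right[symmetric])
      then show ?thesis using True z
        by (simp add: lsum_Cons lsum_Nil del: cadd.simps cz.simps)
    next
      case False
      then show ?thesis using True
        by (simp add: lsum_Cons lsum_Nil cv_cred cv_add distrib_right del: cadd.simps cz.simps)
    qed
  next
    case False
    then show ?thesis using 2 by (simp add: lsum_Cons lsum_Nil algebra_simps)
  qed
qed

lemma lsum_addl: "lsum g (addl A B) = lsum g A + lsum g B"
  unfolding addl_def by (induction A) (auto simp: lsum_ins lsum_Cons lsum_Nil)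

lemma lsum_lsc: "lsum g (lsc c A) = cv c * lsum g A"
  unfolding lsc_def by (induction A) (auto simp: lsum_Cons lsum_Nil cv_cred cv_mul cv_cz algebra_simps)

lemma lf1[lfc]: "cv c * lsum g A = lsum g (lsc c A)" by (simp add: lsum_lsc)
lemma lf2[lfc]: "lsum g A * cv c = lsum g (lsc c A)" by (simp add: lsum_lsc mult.commute)
lemma lf3[lfc]: "padd (lsum g A) (lsum g B) = lsum g (addl A B)" by (simp add: lsum_addl padd_def)
lemma lf4[lfc]: "padd 0 x = x" "padd x 0 = x" by (simp_all add: padd_def)
lemma lf5: "lsum g [] = 0" by (simp add: lsum_Nil)
lemma lf6[lfc]: "lsum g A - lsum g B = lsum g (addl A (lsc (-1,0,0) B))"
  by (simp add: lsum_addl lsum_lsc cv_def)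
lemma lf7[lfc]: "0 - lsum g B = lsum g (lsc (-1,0,0) B)"
  by (simp add: lsum_lsc cv_def)
lemma lf_eq: "(lsum g A = lsum g B) = (lsum g (addl A (lsc (-1,0,0) B)) = 0)"
  by (simp add: lsum_addl lsum_lsc cv_def)

definition lsel :: "idx \<Rightarrow> ((idx \<times> idx) \<times> cq) list \<Rightarrow> (idx \<times> cq) list" where
  "lsel r M = map (\<lambda>(k,c). (fst k, c)) (filter (\<lambda>(k,c). snd k = r) M)"
definition lsel2 :: "idx \<Rightarrow> ((idx \<times> idx) \<times> cq) list \<Rightarrow> (idx \<times> cq) list" where
  "lsel2 r M = map (\<lambda>(k,c). (snd k, c)) (filter (\<lambda>(k,c). fst k = r) M)"
lemmas [lfc] = lsel_def lsel2_def

lemma fun_tens_id_lsel[lfc]: "okl (Bs\<times>Bs) M \<Longrightarrow> fun_tens_id L (vv M) r = lsum L (lsel r M)"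
proof -
  assume M: "okl (Bs\<times>Bs) M"
  have "lsum (\<lambda>k. if snd k = r then L (fst k) else 0) M = lsum L (lsel r M)" for M
    unfolding lsel_def by (induction M) (auto simp: lsum_Cons lsum_Nil)
  then show ?thesis using M by (simp add: fun_tens_id_vv)
qed

lemma id_tens_fun_lsel[lfc]: "okl (Bs\<times>Bs) M \<Longrightarrow> id_tens_fun L (vv M) r = lsum L (lsel2 r M)"
proof -
  assume M: "okl (Bs\<times>Bs) M"
  have "lsum (\<lambda>k. if fst k = r then L (snd k) else 0) M = lsum L (lsel2 r M)" for M
    unfolding lsel2_def by (induction M) (auto simp: lsum_Cons lsum_Nil)
  then show ?thesis using M by (simp add: id_tens_fun_vv)
qed

definition lsumc :: "('i \<Rightarrow> cq) \<Rightarrow> ('i \<times> cq) list \<Rightarrow> cq" where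
  "lsumc g A = foldr (\<lambda>(k,c) acc. cadd (cmul c (g k)) acc) A (0,0,0)"
lemma cv_lsumc: "cv (lsumc g A) = lsum (\<lambda>k. cv (g k)) A"
  unfolding lsumc_def by (induction A) (auto simp: lsum_Cons lsum_Nil cv_add cv_mul cv_cz mult.commute)

definition muvb :: "idx \<Rightarrow> cq" where "muvb p = (if snd p = 0 then ((-1)^fst p, 0, 0) else (0,0,0))"
definition epsb :: "idx \<Rightarrow> cq" where "epsb p = (if snd p = 0 then (1, 0, 0) else (0,0,0))"
lemmas [lfc] = lsumc_def muvb_def epsb_def

lemma muv_cq[lfc]: "okl Bs A \<Longrightarrow> muv (vv A) = cv (lsumc muvb A)"
proof -
  have e: "(\<lambda>p. cv (muvb p)) = (\<lambda>p. if snd p = 0 then (-1)^fst p else 0)"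
    by (auto simp: muvb_def cv_def fun_eq_iff)
  assume "okl Bs A" then show ?thesis by (simp add: muv_vv cv_lsumc e)
qed
lemma eps_cq[lfc]: "okl Bs A \<Longrightarrow> eps (vv A) = cv (lsumc epsb A)"
proof -
  have e: "(\<lambda>p. cv (epsb p)) = (\<lambda>p. if snd p = 0 then 1 else 0)"
    by (auto simp: epsb_def cv_def fun_eq_iff)
  assume "okl Bs A" then show ?thesis by (simp add: eps_vv cv_lsumc e)
qed
lemmas [lfc] = fev_vv

definition lookupc :: "('i \<times> cq) list \<Rightarrow> 'i \<Rightarrow> cq" where
  "lookupc V a = foldr (\<lambda>(k,c) acc. if k = a then cadd c acc else acc) V (0,0,0)"
lemma vv_lookupc: "vv V a = cv (lookupc V a)"
  unfolding lookupc_def by (induction V) (auto simp: vv_Cons_app vv_Nil_app cv_add cv_cz)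

lemma lsum_vvV[lfc]: "lsum (vv V) A = cv (lsumc (lookupc V) A)"
proof -
  have "vv V = (\<lambda>k. cv (lookupc V k))" by (rule ext) (rule vv_lookupc)
  then show ?thesis by (simp add: cv_lsumc)
qed
lemma lsum_hsmul[lfc]: "lsum (hsmul c u) A = c * lsum u A"
  unfolding lsum_def hsmul_def by (induction A) (auto simp: algebra_simps)
lemmas [lfc] = lookupc_def

lemma cv_zero[lfc]: "cz x \<Longrightarrow> cv x = 0" by (rule cv_cz)

lemma lin_Hsp_eq:
  fixes F G :: "'k H1 \<Rightarrow> 'b \<Rightarrow> 'k"
  assumes Fa: "\<And>u v. F (hadd u v) = hadd (F u) (F v)" and Fs: "\<And>c u. F (hsmul c u) = hsmul c (F u)"
    and Ga: "\<And>u v. G (hadd u v) = hadd (G u) (G v)" and Gs: "\<And>c u. G (hsmul c u) = hsmul c (G u)"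
    and bas: "\<And>p. p \<in> Bs \<Longrightarrow> F (eb p) = G (eb p)"
    and h: "h \<in> Hsp"
  shows "F h = G h"
proof -
  define R where "R S = (\<lambda>r. if r \<in> S then h r else 0)" for S
  have hz: "hsmul 0 u = (\<lambda>_. 0)" for u :: "'x \<Rightarrow> 'k" by (simp add: hsmul_def)
  have z: "F (\<lambda>_. 0) = G (\<lambda>_. 0)"
  proof -
    have "F (\<lambda>_. 0) = F (hsmul 0 (\<lambda>_. 0))" by (simp only: hz)
    also have "\<dots> = (\<lambda>_. 0)" by (subst Fs) (rule hz)
    also have "\<dots> = G (hsmul 0 (\<lambda>_. 0))" by (subst Gs) (rule hz[symmetric])
    also have "\<dots> = G (\<lambda>_. 0)" by (simp only: hz)
    finally show ?thesis .
  qed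
  have "S \<subseteq> Bs \<longrightarrow> F (R S) = G (R S)" if "finite S" for S
    using that
  proof (induction S rule: finite_induct)
    case empty
    have "R {} = (\<lambda>_. 0)" by (simp add: R_def)
    then show ?case using z by simp
  next
    case (insert p S)
    show ?case
    proof
      assume sub: "insert p S \<subseteq> Bs"
      have e: "R (insert p S) = hadd (hsmul (h p) (eb p)) (R S)"
        using insert(2) by (auto simp: R_def hadd_def hsmul_def eb_def)
      have IH: "F (R S) = G (R S)" using insert sub by simp
      have pB: "p \<in> Bs" using sub by simp
      show "F (R (insert p S)) = G (R (insert p S))"
        by (simp only: e Fa Fs Ga Gs bas[OF pB] IH)
    qed
  qed
  then have "F (R Bs) = G (R Bs)" by simp
  moreover have "R Bs = h" using h unfolding R_def Hsp_def by (auto simp: fun_eq_iff)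
  ultimately show ?thesis by simp
qed

lemma fun_tens_id_add: "fun_tens_id L (hadd u v) = hadd (fun_tens_id L u) (fun_tens_id L v)"
  by (rule ext) (simp add: fun_tens_id_def hadd_def distrib_left sum.distrib)
lemma fun_tens_id_sm: "fun_tens_id L (hsmul c u) = hsmul c (fun_tens_id L u)"
  by (rule ext) (simp add: fun_tens_id_def hsmul_def sum_distrib_left mult_ac)
lemma id_tens_fun_add: "id_tens_fun L (hadd u v) = hadd (id_tens_fun L u) (id_tens_fun L v)"
  by (rule ext) (simp add: id_tens_fun_def hadd_def distrib_right sum.distrib)
lemma id_tens_fun_sm: "id_tens_fun L (hsmul c u) = hsmul c (id_tens_fun L u)"
  by (rule ext) (simp add: id_tens_fun_def hsmul_def sum_distrib_left mult_ac)
lemma Delta_add: "Delta j (hadd u v) = hadd (Delta j u) (Delta j v)"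
  by (simp add: Delta_def linext_add)
lemma Delta_sm: "Delta j (hsmul c u) = hsmul c (Delta j u)"
  by (simp add: Delta_def linext_sm)
lemma fev_add: "fev l (hadd u v) = fev l u + fev l v"
  by (simp add: fev_def hadd_def distrib_left sum.distrib)
lemma fev_sm: "fev l (hsmul c u) = c * fev l u"
  by (simp add: fev_def hsmul_def sum_distrib_left mult_ac)

lemma lin_Hsp_iff:
  fixes F G :: "'k H1 \<Rightarrow> 'b \<Rightarrow> 'k"
  assumes Fa: "\<And>u v. F (hadd u v) = hadd (F u) (F v)" and Fs: "\<And>c u. F (hsmul c u) = hsmul c (F u)"
    and Ga: "\<And>u v. G (hadd u v) = hadd (G u) (G v)" and Gs: "\<And>c u. G (hsmul c u) = hsmul c (G u)"
  shows "(\<forall>h\<in>Hsp. F h = G h) \<longleftrightarrow> (\<forall>p\<in>Bs. F (eb p) = G (eb p))"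
  using lin_Hsp_eq[OF Fa Fs Ga Gs] eb_Hsp by blast

definition RCL :: "'k H1 \<Rightarrow> 'k H1 \<Rightarrow> 'k H1" where
  "RCL L h = fun_tens_id L (hmul2 (hmul2 (hmul2 (SS2 j (flip2 (pL j))) (fE j)) (Delta j h))
                          (SinvSinv2 j (flip2 (hmul2 (qL j) (finvE j)))))"
definition RCR :: "'k H1 \<Rightarrow> 'k H1 \<Rightarrow> 'k H1" where
  "RCR L h = (\<lambda>r. \<Sum>(p1, p2, p3)\<in>B3. Phi (p1, p2, p3) * muv (eb p3) *
            fev L (hmul h (Sinv j (eb p2))) * eb p1 r)"

lemma RC_iff: "is_right_coint j L \<longleftrightarrow> (\<forall>p\<in>Bs. RCL L (eb p) = RCR L (eb p))"
proof -
  have "is_right_coint j L = (\<forall>h\<in>Hsp. RCL L h = RCR L h)"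
    unfolding is_right_coint_def RCL_def RCR_def ..
  also have "\<dots> = (\<forall>p\<in>Bs. RCL L (eb p) = RCR L (eb p))"
    apply (rule lin_Hsp_iff)
    subgoal by (simp only: RCL_def Delta_add hmul2_add2 hmul2_add1 fun_tens_id_add)
    subgoal by (simp only: RCL_def Delta_sm hmul2_sm2 hmul2_sm1 fun_tens_id_sm)
    subgoal unfolding RCR_def hmul_add1 fev_add
      by (rule ext) (simp add: hadd_def distrib_left distrib_right sum.distrib split_def)
    subgoal unfolding RCR_def hmul_sm1 fev_sm
      by (rule ext) (simp add: hsmul_def sum_distrib_left split_def mult_ac)
    done
  finally show ?thesis .
qed


lemma RCR_lsumk: "RCR L h r = lsumk (\<lambda>(p1,p2,p3). muv (eb p3) * (fev L (hmul h (Sinv j (eb p2))) * eb p1 r)) PhiL"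
  unfolding RCR_def lsum_lsumk[symmetric] by (simp only: Phi_vv mult.assoc sum3_vv okl_PhiL')



definition LCL :: "'k H1 \<Rightarrow> 'k H1 \<Rightarrow> 'k H1" where
  "LCL l h = id_tens_fun l (hmul2 (hmul2 (VV j) (Delta j h)) (UU j))"
definition LCR :: "'k H1 \<Rightarrow> 'k H1 \<Rightarrow> 'k H1" where
  "LCR l h = (\<lambda>r. \<Sum>(p1, p2, p3)\<in>B3. Phiinv (p1, p2, p3) * muv (eb p1) *
            fev l (hmul h (Santi j (eb p2))) * eb p3 r)"

lemma LC_iff: "is_left_coint j l \<longleftrightarrow> (\<forall>p\<in>Bs. LCL l (eb p) = LCR l (eb p))"
proof -
  have "is_left_coint j l = (\<forall>h\<in>Hsp. LCL l h = LCR l h)"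
    unfolding is_left_coint_def LCL_def LCR_def ..
  also have "\<dots> = (\<forall>p\<in>Bs. LCL l (eb p) = LCR l (eb p))"
    apply (rule lin_Hsp_iff)
    subgoal by (simp only: LCL_def Delta_add hmul2_add2 hmul2_add1 id_tens_fun_add)
    subgoal by (simp only: LCL_def Delta_sm hmul2_sm2 hmul2_sm1 id_tens_fun_sm)
    subgoal unfolding LCR_def hmul_add1 fev_add
      by (rule ext) (simp add: hadd_def distrib_left distrib_right sum.distrib split_def)
    subgoal unfolding LCR_def hmul_sm1 fev_sm
      by (rule ext) (simp add: hsmul_def sum_distrib_left split_def mult_ac)
    done
  finally show ?thesis .
qed

lemma LCR_lsumk: "LCR l h r = lsumk (\<lambda>(p1,p2,p3). muv (eb p1) * (fev l (hmul h (Santi j (eb p2))) * eb p3 r)) PhiL"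
  unfolding LCR_def lsum_lsumk[symmetric] by (simp only: Phiinv_eq Phi_vv mult.assoc sum3_vv okl_PhiL')

lemma bm_out: "p \<in> Bs \<Longrightarrow> q \<in> Bs \<Longrightarrow> r \<notin> Bs \<Longrightarrow> bm p q r = 0"
  by (cases p, cases q, cases r) (auto simp: bm_def hsmul_def eb_def)

lemma hmul2_out2: "r \<notin> Bs \<Longrightarrow> hmul2 w z (a, r) = 0"
  by (simp add: hmul2_alt bm_out mem_Times_iff)
lemma hmul2_out1: "r \<notin> Bs \<Longrightarrow> hmul2 w z (r, b) = 0"
  by (simp add: hmul2_alt bm_out mem_Times_iff)

lemma eb_out: "p \<in> Bs \<Longrightarrow> r \<notin> Bs \<Longrightarrow> eb p r = 0"
  by (auto simp: eb_def)

lemma RCL_out: "r \<notin> Bs \<Longrightarrow> RCL L h r = 0"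
  by (simp add: RCL_def fun_tens_id_def hmul2_out2)
lemma RCR_out: "r \<notin> Bs \<Longrightarrow> RCR L h r = 0"
  by (simp add: RCR_def B3_def split_def eb_out mem_Times_iff)
lemma LCL_out: "r \<notin> Bs \<Longrightarrow> LCL l h r = 0"
  by (simp add: LCL_def id_tens_fun_def hmul2_out1)
lemma LCR_out: "r \<notin> Bs \<Longrightarrow> LCR l h r = 0"
  by (simp add: LCR_def B3_def split_def eb_out mem_Times_iff)

lemma fun_eq_Bs: "(\<And>r. r \<notin> Bs \<Longrightarrow> f r = 0) \<Longrightarrow> (\<And>r. r \<notin> Bs \<Longrightarrow> g r = (0::'k)) \<Longrightarrow>
   (f = g) \<longleftrightarrow> (\<forall>r\<in>Bs. f r - g r = 0)"
  by (auto simp: fun_eq_iff)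

lemma RC_iff2: "is_right_coint j L \<longleftrightarrow> (\<forall>p\<in>Bs. \<forall>r\<in>Bs. RCL L (eb p) r - RCR L (eb p) r = 0)"
  unfolding RC_iff by (simp add: fun_eq_Bs RCL_out RCR_out)
lemma LC_iff2: "is_left_coint j l \<longleftrightarrow> (\<forall>p\<in>Bs. \<forall>r\<in>Bs. LCL l (eb p) r - LCR l (eb p) r = 0)"
  unfolding LC_iff by (simp add: fun_eq_Bs LCL_out LCR_out)

lemma ball_Bs: "(\<forall>p\<in>Bs. P p) \<longleftrightarrow> P (0,0) \<and> P (0,1) \<and> P (0,2) \<and> P (0,3) \<and> P (1,0) \<and> P (1,1) \<and> P (1,2) \<and> P (1,3)"
  by (simp add: Bs_eq)

end


context qh begin

schematic_goal RCp_00_00: "RCL L (eb (0,0)) (0,0) - RCR L (eb (0,0)) (0,0) = lsum L ?D"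
  by (simp only: RCR_lsumk RCL_def) (simp add: vvc lfc pL_vv f_vv qL_vv finv_vv lsumk_Cons lsumk_Nil PhiL_def vv_Cons_app vv_Nil_app, (rule lf5)?)
schematic_goal LCp_00_00: "LCL l (eb (0,0)) (0,0) - LCR l (eb (0,0)) (0,0) = lsum l ?D"
  by (simp only: LCR_lsumk LCL_def) (simp add: vvc lfc VV_vv UU_vv lsumk_Cons lsumk_Nil PhiL_def vv_Cons_app vv_Nil_app, (rule lf5)?)
schematic_goal RCp_00_01: "RCL L (eb (0,0)) (0,1) - RCR L (eb (0,0)) (0,1) = lsum L ?D"
  by (simp only: RCR_lsumk RCL_def) (simp add: vvc lfc pL_vv f_vv qL_vv finv_vv lsumk_Cons lsumk_Nil PhiL_def vv_Cons_app vv_Nil_app, (rule lf5)?)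
schematic_goal LCp_00_01: "LCL l (eb (0,0)) (0,1) - LCR l (eb (0,0)) (0,1) = lsum l ?D"
  by (simp only: LCR_lsumk LCL_def) (simp add: vvc lfc VV_vv UU_vv lsumk_Cons lsumk_Nil PhiL_def vv_Cons_app vv_Nil_app, (rule lf5)?)
schematic_goal RCp_00_02: "RCL L (eb (0,0)) (0,2) - RCR L (eb (0,0)) (0,2) = lsum L ?D"
  by (simp only: RCR_lsumk RCL_def) (simp add: vvc lfc pL_vv f_vv qL_vv finv_vv lsumk_Cons lsumk_Nil PhiL_def vv_Cons_app vv_Nil_app, (rule lf5)?)
schematic_goal LCp_00_02: "LCL l (eb (0,0)) (0,2) - LCR l (eb (0,0)) (0,2) = lsum l ?D"
  by (simp only: LCR_lsumk LCL_def) (simp add: vvc lfc VV_vv UU_vv lsumk_Cons lsumk_Nil PhiL_def vv_Cons_app vv_Nil_app, (rule lf5)?)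
schematic_goal RCp_00_03: "RCL L (eb (0,0)) (0,3) - RCR L (eb (0,0)) (0,3) = lsum L ?D"
  by (simp only: RCR_lsumk RCL_def) (simp add: vvc lfc pL_vv f_vv qL_vv finv_vv lsumk_Cons lsumk_Nil PhiL_def vv_Cons_app vv_Nil_app, (rule lf5)?)
schematic_goal LCp_00_03: "LCL l (eb (0,0)) (0,3) - LCR l (eb (0,0)) (0,3) = lsum l ?D"
  by (simp only: LCR_lsumk LCL_def) (simp add: vvc lfc VV_vv UU_vv lsumk_Cons lsumk_Nil PhiL_def vv_Cons_app vv_Nil_app, (rule lf5)?)
schematic_goal RCp_00_10: "RCL L (eb (0,0)) (1,0) - RCR L (eb (0,0)) (1,0) = lsum L ?D"
  by (simp only: RCR_lsumk RCL_def) (simp add: vvc lfc pL_vv f_vv qL_vv finv_vv lsumk_Cons lsumk_Nil PhiL_def vv_Cons_app vv_Nil_app, (rule lf5)?)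
schematic_goal LCp_00_10: "LCL l (eb (0,0)) (1,0) - LCR l (eb (0,0)) (1,0) = lsum l ?D"
  by (simp only: LCR_lsumk LCL_def) (simp add: vvc lfc VV_vv UU_vv lsumk_Cons lsumk_Nil PhiL_def vv_Cons_app vv_Nil_app, (rule lf5)?)
schematic_goal RCp_00_11: "RCL L (eb (0,0)) (1,1) - RCR L (eb (0,0)) (1,1) = lsum L ?D"
  by (simp only: RCR_lsumk RCL_def) (simp add: vvc lfc pL_vv f_vv qL_vv finv_vv lsumk_Cons lsumk_Nil PhiL_def vv_Cons_app vv_Nil_app, (rule lf5)?)
schematic_goal LCp_00_11: "LCL l (eb (0,0)) (1,1) - LCR l (eb (0,0)) (1,1) = lsum l ?D"
  by (simp only: LCR_lsumk LCL_def) (simp add: vvc lfc VV_vv UU_vv lsumk_Cons lsumk_Nil PhiL_def vv_Cons_app vv_Nil_app, (rule lf5)?)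
schematic_goal RCp_00_12: "RCL L (eb (0,0)) (1,2) - RCR L (eb (0,0)) (1,2) = lsum L ?D"
  by (simp only: RCR_lsumk RCL_def) (simp add: vvc lfc pL_vv f_vv qL_vv finv_vv lsumk_Cons lsumk_Nil PhiL_def vv_Cons_app vv_Nil_app, (rule lf5)?)
schematic_goal LCp_00_12: "LCL l (eb (0,0)) (1,2) - LCR l (eb (0,0)) (1,2) = lsum l ?D"
  by (simp only: LCR_lsumk LCL_def) (simp add: vvc lfc VV_vv UU_vv lsumk_Cons lsumk_Nil PhiL_def vv_Cons_app vv_Nil_app, (rule lf5)?)
schematic_goal RCp_00_13: "RCL L (eb (0,0)) (1,3) - RCR L (eb (0,0)) (1,3) = lsum L ?D"
  by (simp only: RCR_lsumk RCL_def) (simp add: vvc lfc pL_vv f_vv qL_vv finv_vv lsumk_Cons lsumk_Nil PhiL_def vv_Cons_app vv_Nil_app, (rule lf5)?)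
schematic_goal LCp_00_13: "LCL l (eb (0,0)) (1,3) - LCR l (eb (0,0)) (1,3) = lsum l ?D"
  by (simp only: LCR_lsumk LCL_def) (simp add: vvc lfc VV_vv UU_vv lsumk_Cons lsumk_Nil PhiL_def vv_Cons_app vv_Nil_app, (rule lf5)?)
schematic_goal RCp_01_00: "RCL L (eb (0,1)) (0,0) - RCR L (eb (0,1)) (0,0) = lsum L ?D"
  by (simp only: RCR_lsumk RCL_def) (simp add: vvc lfc pL_vv f_vv qL_vv finv_vv lsumk_Cons lsumk_Nil PhiL_def vv_Cons_app vv_Nil_app, (rule lf5)?)
schematic_goal LCp_01_00: "LCL l (eb (0,1)) (0,0) - LCR l (eb (0,1)) (0,0) = lsum l ?D"
  by (simp only: LCR_lsumk LCL_def) (simp add: vvc lfc VV_vv UU_vv lsumk_Cons lsumk_Nil PhiL_def vv_Cons_app vv_Nil_app, (rule lf5)?)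
schematic_goal RCp_01_01: "RCL L (eb (0,1)) (0,1) - RCR L (eb (0,1)) (0,1) = lsum L ?D"
  by (simp only: RCR_lsumk RCL_def) (simp add: vvc lfc pL_vv f_vv qL_vv finv_vv lsumk_Cons lsumk_Nil PhiL_def vv_Cons_app vv_Nil_app, (rule lf5)?)
schematic_goal LCp_01_01: "LCL l (eb (0,1)) (0,1) - LCR l (eb (0,1)) (0,1) = lsum l ?D"
  by (simp only: LCR_lsumk LCL_def) (simp add: vvc lfc VV_vv UU_vv lsumk_Cons lsumk_Nil PhiL_def vv_Cons_app vv_Nil_app, (rule lf5)?)
schematic_goal RCp_01_02: "RCL L (eb (0,1)) (0,2) - RCR L (eb (0,1)) (0,2) = lsum L ?D"
  by (simp only: RCR_lsumk RCL_def) (simp add: vvc lfc pL_vv f_vv qL_vv finv_vv lsumk_Cons lsumk_Nil PhiL_def vv_Cons_app vv_Nil_app, (rule lf5)?)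
schematic_goal LCp_01_02: "LCL l (eb (0,1)) (0,2) - LCR l (eb (0,1)) (0,2) = lsum l ?D"
  by (simp only: LCR_lsumk LCL_def) (simp add: vvc lfc VV_vv UU_vv lsumk_Cons lsumk_Nil PhiL_def vv_Cons_app vv_Nil_app, (rule lf5)?)
schematic_goal RCp_01_03: "RCL L (eb (0,1)) (0,3) - RCR L (eb (0,1)) (0,3) = lsum L ?D"
  by (simp only: RCR_lsumk RCL_def) (simp add: vvc lfc pL_vv f_vv qL_vv finv_vv lsumk_Cons lsumk_Nil PhiL_def vv_Cons_app vv_Nil_app, (rule lf5)?)
schematic_goal LCp_01_03: "LCL l (eb (0,1)) (0,3) - LCR l (eb (0,1)) (0,3) = lsum l ?D"
  by (simp only: LCR_lsumk LCL_def) (simp add: vvc lfc VV_vv UU_vv lsumk_Cons lsumk_Nil PhiL_def vv_Cons_app vv_Nil_app, (rule lf5)?)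
schematic_goal RCp_01_10: "RCL L (eb (0,1)) (1,0) - RCR L (eb (0,1)) (1,0) = lsum L ?D"
  by (simp only: RCR_lsumk RCL_def) (simp add: vvc lfc pL_vv f_vv qL_vv finv_vv lsumk_Cons lsumk_Nil PhiL_def vv_Cons_app vv_Nil_app, (rule lf5)?)
schematic_goal LCp_01_10: "LCL l (eb (0,1)) (1,0) - LCR l (eb (0,1)) (1,0) = lsum l ?D"
  by (simp only: LCR_lsumk LCL_def) (simp add: vvc lfc VV_vv UU_vv lsumk_Cons lsumk_Nil PhiL_def vv_Cons_app vv_Nil_app, (rule lf5)?)
schematic_goal RCp_01_11: "RCL L (eb (0,1)) (1,1) - RCR L (eb (0,1)) (1,1) = lsum L ?D"
  by (simp only: RCR_lsumk RCL_def) (simp add: vvc lfc pL_vv f_vv qL_vv finv_vv lsumk_Cons lsumk_Nil PhiL_def vv_Cons_app vv_Nil_app, (rule lf5)?)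
schematic_goal LCp_01_11: "LCL l (eb (0,1)) (1,1) - LCR l (eb (0,1)) (1,1) = lsum l ?D"
  by (simp only: LCR_lsumk LCL_def) (simp add: vvc lfc VV_vv UU_vv lsumk_Cons lsumk_Nil PhiL_def vv_Cons_app vv_Nil_app, (rule lf5)?)
schematic_goal RCp_01_12: "RCL L (eb (0,1)) (1,2) - RCR L (eb (0,1)) (1,2) = lsum L ?D"
  by (simp only: RCR_lsumk RCL_def) (simp add: vvc lfc pL_vv f_vv qL_vv finv_vv lsumk_Cons lsumk_Nil PhiL_def vv_Cons_app vv_Nil_app, (rule lf5)?)
schematic_goal LCp_01_12: "LCL l (eb (0,1)) (1,2) - LCR l (eb (0,1)) (1,2) = lsum l ?D"
  by (simp only: LCR_lsumk LCL_def) (simp add: vvc lfc VV_vv UU_vv lsumk_Cons lsumk_Nil PhiL_def vv_Cons_app vv_Nil_app, (rule lf5)?)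
schematic_goal RCp_01_13: "RCL L (eb (0,1)) (1,3) - RCR L (eb (0,1)) (1,3) = lsum L ?D"
  by (simp only: RCR_lsumk RCL_def) (simp add: vvc lfc pL_vv f_vv qL_vv finv_vv lsumk_Cons lsumk_Nil PhiL_def vv_Cons_app vv_Nil_app, (rule lf5)?)
schematic_goal LCp_01_13: "LCL l (eb (0,1)) (1,3) - LCR l (eb (0,1)) (1,3) = lsum l ?D"
  by (simp only: LCR_lsumk LCL_def) (simp add: vvc lfc VV_vv UU_vv lsumk_Cons lsumk_Nil PhiL_def vv_Cons_app vv_Nil_app, (rule lf5)?)
schematic_goal RCp_02_00: "RCL L (eb (0,2)) (0,0) - RCR L (eb (0,2)) (0,0) = lsum L ?D"
  by (simp only: RCR_lsumk RCL_def) (simp add: vvc lfc pL_vv f_vv qL_vv finv_vv lsumk_Cons lsumk_Nil PhiL_def vv_Cons_app vv_Nil_app, (rule lf5)?)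
schematic_goal LCp_02_00: "LCL l (eb (0,2)) (0,0) - LCR l (eb (0,2)) (0,0) = lsum l ?D"
  by (simp only: LCR_lsumk LCL_def) (simp add: vvc lfc VV_vv UU_vv lsumk_Cons lsumk_Nil PhiL_def vv_Cons_app vv_Nil_app, (rule lf5)?)
schematic_goal RCp_02_01: "RCL L (eb (0,2)) (0,1) - RCR L (eb (0,2)) (0,1) = lsum L ?D"
  by (simp only: RCR_lsumk RCL_def) (simp add: vvc lfc pL_vv f_vv qL_vv finv_vv lsumk_Cons lsumk_Nil PhiL_def vv_Cons_app vv_Nil_app, (rule lf5)?)
schematic_goal LCp_02_01: "LCL l (eb (0,2)) (0,1) - LCR l (eb (0,2)) (0,1) = lsum l ?D"
  by (simp only: LCR_lsumk LCL_def) (simp add: vvc lfc VV_vv UU_vv lsumk_Cons lsumk_Nil PhiL_def vv_Cons_app vv_Nil_app, (rule lf5)?)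
schematic_goal RCp_02_02: "RCL L (eb (0,2)) (0,2) - RCR L (eb (0,2)) (0,2) = lsum L ?D"
  by (simp only: RCR_lsumk RCL_def) (simp add: vvc lfc pL_vv f_vv qL_vv finv_vv lsumk_Cons lsumk_Nil PhiL_def vv_Cons_app vv_Nil_app, (rule lf5)?)
schematic_goal LCp_02_02: "LCL l (eb (0,2)) (0,2) - LCR l (eb (0,2)) (0,2) = lsum l ?D"
  by (simp only: LCR_lsumk LCL_def) (simp add: vvc lfc VV_vv UU_vv lsumk_Cons lsumk_Nil PhiL_def vv_Cons_app vv_Nil_app, (rule lf5)?)
schematic_goal RCp_02_03: "RCL L (eb (0,2)) (0,3) - RCR L (eb (0,2)) (0,3) = lsum L ?D"
  by (simp only: RCR_lsumk RCL_def) (simp add: vvc lfc pL_vv f_vv qL_vv finv_vv lsumk_Cons lsumk_Nil PhiL_def vv_Cons_app vv_Nil_app, (rule lf5)?)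
schematic_goal LCp_02_03: "LCL l (eb (0,2)) (0,3) - LCR l (eb (0,2)) (0,3) = lsum l ?D"
  by (simp only: LCR_lsumk LCL_def) (simp add: vvc lfc VV_vv UU_vv lsumk_Cons lsumk_Nil PhiL_def vv_Cons_app vv_Nil_app, (rule lf5)?)
schematic_goal RCp_02_10: "RCL L (eb (0,2)) (1,0) - RCR L (eb (0,2)) (1,0) = lsum L ?D"
  by (simp only: RCR_lsumk RCL_def) (simp add: vvc lfc pL_vv f_vv qL_vv finv_vv lsumk_Cons lsumk_Nil PhiL_def vv_Cons_app vv_Nil_app, (rule lf5)?)
schematic_goal LCp_02_10: "LCL l (eb (0,2)) (1,0) - LCR l (eb (0,2)) (1,0) = lsum l ?D"
  by (simp only: LCR_lsumk LCL_def) (simp add: vvc lfc VV_vv UU_vv lsumk_Cons lsumk_Nil PhiL_def vv_Cons_app vv_Nil_app, (rule lf5)?)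
schematic_goal RCp_02_11: "RCL L (eb (0,2)) (1,1) - RCR L (eb (0,2)) (1,1) = lsum L ?D"
  by (simp only: RCR_lsumk RCL_def) (simp add: vvc lfc pL_vv f_vv qL_vv finv_vv lsumk_Cons lsumk_Nil PhiL_def vv_Cons_app vv_Nil_app, (rule lf5)?)
schematic_goal LCp_02_11: "LCL l (eb (0,2)) (1,1) - LCR l (eb (0,2)) (1,1) = lsum l ?D"
  by (simp only: LCR_lsumk LCL_def) (simp add: vvc lfc VV_vv UU_vv lsumk_Cons lsumk_Nil PhiL_def vv_Cons_app vv_Nil_app, (rule lf5)?)
schematic_goal RCp_02_12: "RCL L (eb (0,2)) (1,2) - RCR L (eb (0,2)) (1,2) = lsum L ?D"
  by (simp only: RCR_lsumk RCL_def) (simp add: vvc lfc pL_vv f_vv qL_vv finv_vv lsumk_Cons lsumk_Nil PhiL_def vv_Cons_app vv_Nil_app, (rule lf5)?)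
schematic_goal LCp_02_12: "LCL l (eb (0,2)) (1,2) - LCR l (eb (0,2)) (1,2) = lsum l ?D"
  by (simp only: LCR_lsumk LCL_def) (simp add: vvc lfc VV_vv UU_vv lsumk_Cons lsumk_Nil PhiL_def vv_Cons_app vv_Nil_app, (rule lf5)?)
schematic_goal RCp_02_13: "RCL L (eb (0,2)) (1,3) - RCR L (eb (0,2)) (1,3) = lsum L ?D"
  by (simp only: RCR_lsumk RCL_def) (simp add: vvc lfc pL_vv f_vv qL_vv finv_vv lsumk_Cons lsumk_Nil PhiL_def vv_Cons_app vv_Nil_app, (rule lf5)?)
schematic_goal LCp_02_13: "LCL l (eb (0,2)) (1,3) - LCR l (eb (0,2)) (1,3) = lsum l ?D"
  by (simp only: LCR_lsumk LCL_def) (simp add: vvc lfc VV_vv UU_vv lsumk_Cons lsumk_Nil PhiL_def vv_Cons_app vv_Nil_app, (rule lf5)?)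
schematic_goal RCp_03_00: "RCL L (eb (0,3)) (0,0) - RCR L (eb (0,3)) (0,0) = lsum L ?D"
  by (simp only: RCR_lsumk RCL_def) (simp add: vvc lfc pL_vv f_vv qL_vv finv_vv lsumk_Cons lsumk_Nil PhiL_def vv_Cons_app vv_Nil_app, (rule lf5)?)
schematic_goal LCp_03_00: "LCL l (eb (0,3)) (0,0) - LCR l (eb (0,3)) (0,0) = lsum l ?D"
  by (simp only: LCR_lsumk LCL_def) (simp add: vvc lfc VV_vv UU_vv lsumk_Cons lsumk_Nil PhiL_def vv_Cons_app vv_Nil_app, (rule lf5)?)
schematic_goal RCp_03_01: "RCL L (eb (0,3)) (0,1) - RCR L (eb (0,3)) (0,1) = lsum L ?D"
  by (simp only: RCR_lsumk RCL_def) (simp add: vvc lfc pL_vv f_vv qL_vv finv_vv lsumk_Cons lsumk_Nil PhiL_def vv_Cons_app vv_Nil_app, (rule lf5)?)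
schematic_goal LCp_03_01: "LCL l (eb (0,3)) (0,1) - LCR l (eb (0,3)) (0,1) = lsum l ?D"
  by (simp only: LCR_lsumk LCL_def) (simp add: vvc lfc VV_vv UU_vv lsumk_Cons lsumk_Nil PhiL_def vv_Cons_app vv_Nil_app, (rule lf5)?)
schematic_goal RCp_03_02: "RCL L (eb (0,3)) (0,2) - RCR L (eb (0,3)) (0,2) = lsum L ?D"
  by (simp only: RCR_lsumk RCL_def) (simp add: vvc lfc pL_vv f_vv qL_vv finv_vv lsumk_Cons lsumk_Nil PhiL_def vv_Cons_app vv_Nil_app, (rule lf5)?)
schematic_goal LCp_03_02: "LCL l (eb (0,3)) (0,2) - LCR l (eb (0,3)) (0,2) = lsum l ?D"
  by (simp only: LCR_lsumk LCL_def) (simp add: vvc lfc VV_vv UU_vv lsumk_Cons lsumk_Nil PhiL_def vv_Cons_app vv_Nil_app, (rule lf5)?)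
schematic_goal RCp_03_03: "RCL L (eb (0,3)) (0,3) - RCR L (eb (0,3)) (0,3) = lsum L ?D"
  by (simp only: RCR_lsumk RCL_def) (simp add: vvc lfc pL_vv f_vv qL_vv finv_vv lsumk_Cons lsumk_Nil PhiL_def vv_Cons_app vv_Nil_app, (rule lf5)?)
schematic_goal LCp_03_03: "LCL l (eb (0,3)) (0,3) - LCR l (eb (0,3)) (0,3) = lsum l ?D"
  by (simp only: LCR_lsumk LCL_def) (simp add: vvc lfc VV_vv UU_vv lsumk_Cons lsumk_Nil PhiL_def vv_Cons_app vv_Nil_app, (rule lf5)?)
schematic_goal RCp_03_10: "RCL L (eb (0,3)) (1,0) - RCR L (eb (0,3)) (1,0) = lsum L ?D"
  by (simp only: RCR_lsumk RCL_def) (simp add: vvc lfc pL_vv f_vv qL_vv finv_vv lsumk_Cons lsumk_Nil PhiL_def vv_Cons_app vv_Nil_app, (rule lf5)?)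
schematic_goal LCp_03_10: "LCL l (eb (0,3)) (1,0) - LCR l (eb (0,3)) (1,0) = lsum l ?D"
  by (simp only: LCR_lsumk LCL_def) (simp add: vvc lfc VV_vv UU_vv lsumk_Cons lsumk_Nil PhiL_def vv_Cons_app vv_Nil_app, (rule lf5)?)
schematic_goal RCp_03_11: "RCL L (eb (0,3)) (1,1) - RCR L (eb (0,3)) (1,1) = lsum L ?D"
  by (simp only: RCR_lsumk RCL_def) (simp add: vvc lfc pL_vv f_vv qL_vv finv_vv lsumk_Cons lsumk_Nil PhiL_def vv_Cons_app vv_Nil_app, (rule lf5)?)
schematic_goal LCp_03_11: "LCL l (eb (0,3)) (1,1) - LCR l (eb (0,3)) (1,1) = lsum l ?D"
  by (simp only: LCR_lsumk LCL_def) (simp add: vvc lfc VV_vv UU_vv lsumk_Cons lsumk_Nil PhiL_def vv_Cons_app vv_Nil_app, (rule lf5)?)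
schematic_goal RCp_03_12: "RCL L (eb (0,3)) (1,2) - RCR L (eb (0,3)) (1,2) = lsum L ?D"
  by (simp only: RCR_lsumk RCL_def) (simp add: vvc lfc pL_vv f_vv qL_vv finv_vv lsumk_Cons lsumk_Nil PhiL_def vv_Cons_app vv_Nil_app, (rule lf5)?)
schematic_goal LCp_03_12: "LCL l (eb (0,3)) (1,2) - LCR l (eb (0,3)) (1,2) = lsum l ?D"
  by (simp only: LCR_lsumk LCL_def) (simp add: vvc lfc VV_vv UU_vv lsumk_Cons lsumk_Nil PhiL_def vv_Cons_app vv_Nil_app, (rule lf5)?)
schematic_goal RCp_03_13: "RCL L (eb (0,3)) (1,3) - RCR L (eb (0,3)) (1,3) = lsum L ?D"
  by (simp only: RCR_lsumk RCL_def) (simp add: vvc lfc pL_vv f_vv qL_vv finv_vv lsumk_Cons lsumk_Nil PhiL_def vv_Cons_app vv_Nil_app, (rule lf5)?)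
schematic_goal LCp_03_13: "LCL l (eb (0,3)) (1,3) - LCR l (eb (0,3)) (1,3) = lsum l ?D"
  by (simp only: LCR_lsumk LCL_def) (simp add: vvc lfc VV_vv UU_vv lsumk_Cons lsumk_Nil PhiL_def vv_Cons_app vv_Nil_app, (rule lf5)?)
schematic_goal RCp_10_00: "RCL L (eb (1,0)) (0,0) - RCR L (eb (1,0)) (0,0) = lsum L ?D"
  by (simp only: RCR_lsumk RCL_def) (simp add: vvc lfc pL_vv f_vv qL_vv finv_vv lsumk_Cons lsumk_Nil PhiL_def vv_Cons_app vv_Nil_app, (rule lf5)?)
schematic_goal LCp_10_00: "LCL l (eb (1,0)) (0,0) - LCR l (eb (1,0)) (0,0) = lsum l ?D"
  by (simp only: LCR_lsumk LCL_def) (simp add: vvc lfc VV_vv UU_vv lsumk_Cons lsumk_Nil PhiL_def vv_Cons_app vv_Nil_app, (rule lf5)?)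
schematic_goal RCp_10_01: "RCL L (eb (1,0)) (0,1) - RCR L (eb (1,0)) (0,1) = lsum L ?D"
  by (simp only: RCR_lsumk RCL_def) (simp add: vvc lfc pL_vv f_vv qL_vv finv_vv lsumk_Cons lsumk_Nil PhiL_def vv_Cons_app vv_Nil_app, (rule lf5)?)
schematic_goal LCp_10_01: "LCL l (eb (1,0)) (0,1) - LCR l (eb (1,0)) (0,1) = lsum l ?D"
  by (simp only: LCR_lsumk LCL_def) (simp add: vvc lfc VV_vv UU_vv lsumk_Cons lsumk_Nil PhiL_def vv_Cons_app vv_Nil_app, (rule lf5)?)
schematic_goal RCp_10_02: "RCL L (eb (1,0)) (0,2) - RCR L (eb (1,0)) (0,2) = lsum L ?D"
  by (simp only: RCR_lsumk RCL_def) (simp add: vvc lfc pL_vv f_vv qL_vv finv_vv lsumk_Cons lsumk_Nil PhiL_def vv_Cons_app vv_Nil_app, (rule lf5)?)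
schematic_goal LCp_10_02: "LCL l (eb (1,0)) (0,2) - LCR l (eb (1,0)) (0,2) = lsum l ?D"
  by (simp only: LCR_lsumk LCL_def) (simp add: vvc lfc VV_vv UU_vv lsumk_Cons lsumk_Nil PhiL_def vv_Cons_app vv_Nil_app, (rule lf5)?)
schematic_goal RCp_10_03: "RCL L (eb (1,0)) (0,3) - RCR L (eb (1,0)) (0,3) = lsum L ?D"
  by (simp only: RCR_lsumk RCL_def) (simp add: vvc lfc pL_vv f_vv qL_vv finv_vv lsumk_Cons lsumk_Nil PhiL_def vv_Cons_app vv_Nil_app, (rule lf5)?)
schematic_goal LCp_10_03: "LCL l (eb (1,0)) (0,3) - LCR l (eb (1,0)) (0,3) = lsum l ?D"
  by (simp only: LCR_lsumk LCL_def) (simp add: vvc lfc VV_vv UU_vv lsumk_Cons lsumk_Nil PhiL_def vv_Cons_app vv_Nil_app, (rule lf5)?)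
schematic_goal RCp_10_10: "RCL L (eb (1,0)) (1,0) - RCR L (eb (1,0)) (1,0) = lsum L ?D"
  by (simp only: RCR_lsumk RCL_def) (simp add: vvc lfc pL_vv f_vv qL_vv finv_vv lsumk_Cons lsumk_Nil PhiL_def vv_Cons_app vv_Nil_app, (rule lf5)?)
schematic_goal LCp_10_10: "LCL l (eb (1,0)) (1,0) - LCR l (eb (1,0)) (1,0) = lsum l ?D"
  by (simp only: LCR_lsumk LCL_def) (simp add: vvc lfc VV_vv UU_vv lsumk_Cons lsumk_Nil PhiL_def vv_Cons_app vv_Nil_app, (rule lf5)?)
schematic_goal RCp_10_11: "RCL L (eb (1,0)) (1,1) - RCR L (eb (1,0)) (1,1) = lsum L ?D"
  by (simp only: RCR_lsumk RCL_def) (simp add: vvc lfc pL_vv f_vv qL_vv finv_vv lsumk_Cons lsumk_Nil PhiL_def vv_Cons_app vv_Nil_app, (rule lf5)?)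
schematic_goal LCp_10_11: "LCL l (eb (1,0)) (1,1) - LCR l (eb (1,0)) (1,1) = lsum l ?D"
  by (simp only: LCR_lsumk LCL_def) (simp add: vvc lfc VV_vv UU_vv lsumk_Cons lsumk_Nil PhiL_def vv_Cons_app vv_Nil_app, (rule lf5)?)
schematic_goal RCp_10_12: "RCL L (eb (1,0)) (1,2) - RCR L (eb (1,0)) (1,2) = lsum L ?D"
  by (simp only: RCR_lsumk RCL_def) (simp add: vvc lfc pL_vv f_vv qL_vv finv_vv lsumk_Cons lsumk_Nil PhiL_def vv_Cons_app vv_Nil_app, (rule lf5)?)
schematic_goal LCp_10_12: "LCL l (eb (1,0)) (1,2) - LCR l (eb (1,0)) (1,2) = lsum l ?D"
  by (simp only: LCR_lsumk LCL_def) (simp add: vvc lfc VV_vv UU_vv lsumk_Cons lsumk_Nil PhiL_def vv_Cons_app vv_Nil_app, (rule lf5)?)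
schematic_goal RCp_10_13: "RCL L (eb (1,0)) (1,3) - RCR L (eb (1,0)) (1,3) = lsum L ?D"
  by (simp only: RCR_lsumk RCL_def) (simp add: vvc lfc pL_vv f_vv qL_vv finv_vv lsumk_Cons lsumk_Nil PhiL_def vv_Cons_app vv_Nil_app, (rule lf5)?)
schematic_goal LCp_10_13: "LCL l (eb (1,0)) (1,3) - LCR l (eb (1,0)) (1,3) = lsum l ?D"
  by (simp only: LCR_lsumk LCL_def) (simp add: vvc lfc VV_vv UU_vv lsumk_Cons lsumk_Nil PhiL_def vv_Cons_app vv_Nil_app, (rule lf5)?)
schematic_goal RCp_11_00: "RCL L (eb (1,1)) (0,0) - RCR L (eb (1,1)) (0,0) = lsum L ?D"
  by (simp only: RCR_lsumk RCL_def) (simp add: vvc lfc pL_vv f_vv qL_vv finv_vv lsumk_Cons lsumk_Nil PhiL_def vv_Cons_app vv_Nil_app, (rule lf5)?)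
schematic_goal LCp_11_00: "LCL l (eb (1,1)) (0,0) - LCR l (eb (1,1)) (0,0) = lsum l ?D"
  by (simp only: LCR_lsumk LCL_def) (simp add: vvc lfc VV_vv UU_vv lsumk_Cons lsumk_Nil PhiL_def vv_Cons_app vv_Nil_app, (rule lf5)?)
schematic_goal RCp_11_01: "RCL L (eb (1,1)) (0,1) - RCR L (eb (1,1)) (0,1) = lsum L ?D"
  by (simp only: RCR_lsumk RCL_def) (simp add: vvc lfc pL_vv f_vv qL_vv finv_vv lsumk_Cons lsumk_Nil PhiL_def vv_Cons_app vv_Nil_app, (rule lf5)?)
schematic_goal LCp_11_01: "LCL l (eb (1,1)) (0,1) - LCR l (eb (1,1)) (0,1) = lsum l ?D"
  by (simp only: LCR_lsumk LCL_def) (simp add: vvc lfc VV_vv UU_vv lsumk_Cons lsumk_Nil PhiL_def vv_Cons_app vv_Nil_app, (rule lf5)?)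
schematic_goal RCp_11_02: "RCL L (eb (1,1)) (0,2) - RCR L (eb (1,1)) (0,2) = lsum L ?D"
  by (simp only: RCR_lsumk RCL_def) (simp add: vvc lfc pL_vv f_vv qL_vv finv_vv lsumk_Cons lsumk_Nil PhiL_def vv_Cons_app vv_Nil_app, (rule lf5)?)
schematic_goal LCp_11_02: "LCL l (eb (1,1)) (0,2) - LCR l (eb (1,1)) (0,2) = lsum l ?D"
  by (simp only: LCR_lsumk LCL_def) (simp add: vvc lfc VV_vv UU_vv lsumk_Cons lsumk_Nil PhiL_def vv_Cons_app vv_Nil_app, (rule lf5)?)
schematic_goal RCp_11_03: "RCL L (eb (1,1)) (0,3) - RCR L (eb (1,1)) (0,3) = lsum L ?D"
  by (simp only: RCR_lsumk RCL_def) (simp add: vvc lfc pL_vv f_vv qL_vv finv_vv lsumk_Cons lsumk_Nil PhiL_def vv_Cons_app vv_Nil_app, (rule lf5)?)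
schematic_goal LCp_11_03: "LCL l (eb (1,1)) (0,3) - LCR l (eb (1,1)) (0,3) = lsum l ?D"
  by (simp only: LCR_lsumk LCL_def) (simp add: vvc lfc VV_vv UU_vv lsumk_Cons lsumk_Nil PhiL_def vv_Cons_app vv_Nil_app, (rule lf5)?)
schematic_goal RCp_11_10: "RCL L (eb (1,1)) (1,0) - RCR L (eb (1,1)) (1,0) = lsum L ?D"
  by (simp only: RCR_lsumk RCL_def) (simp add: vvc lfc pL_vv f_vv qL_vv finv_vv lsumk_Cons lsumk_Nil PhiL_def vv_Cons_app vv_Nil_app, (rule lf5)?)
schematic_goal LCp_11_10: "LCL l (eb (1,1)) (1,0) - LCR l (eb (1,1)) (1,0) = lsum l ?D"
  by (simp only: LCR_lsumk LCL_def) (simp add: vvc lfc VV_vv UU_vv lsumk_Cons lsumk_Nil PhiL_def vv_Cons_app vv_Nil_app, (rule lf5)?)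
schematic_goal RCp_11_11: "RCL L (eb (1,1)) (1,1) - RCR L (eb (1,1)) (1,1) = lsum L ?D"
  by (simp only: RCR_lsumk RCL_def) (simp add: vvc lfc pL_vv f_vv qL_vv finv_vv lsumk_Cons lsumk_Nil PhiL_def vv_Cons_app vv_Nil_app, (rule lf5)?)
schematic_goal LCp_11_11: "LCL l (eb (1,1)) (1,1) - LCR l (eb (1,1)) (1,1) = lsum l ?D"
  by (simp only: LCR_lsumk LCL_def) (simp add: vvc lfc VV_vv UU_vv lsumk_Cons lsumk_Nil PhiL_def vv_Cons_app vv_Nil_app, (rule lf5)?)
schematic_goal RCp_11_12: "RCL L (eb (1,1)) (1,2) - RCR L (eb (1,1)) (1,2) = lsum L ?D"
  by (simp only: RCR_lsumk RCL_def) (simp add: vvc lfc pL_vv f_vv qL_vv finv_vv lsumk_Cons lsumk_Nil PhiL_def vv_Cons_app vv_Nil_app, (rule lf5)?)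
schematic_goal LCp_11_12: "LCL l (eb (1,1)) (1,2) - LCR l (eb (1,1)) (1,2) = lsum l ?D"
  by (simp only: LCR_lsumk LCL_def) (simp add: vvc lfc VV_vv UU_vv lsumk_Cons lsumk_Nil PhiL_def vv_Cons_app vv_Nil_app, (rule lf5)?)
schematic_goal RCp_11_13: "RCL L (eb (1,1)) (1,3) - RCR L (eb (1,1)) (1,3) = lsum L ?D"
  by (simp only: RCR_lsumk RCL_def) (simp add: vvc lfc pL_vv f_vv qL_vv finv_vv lsumk_Cons lsumk_Nil PhiL_def vv_Cons_app vv_Nil_app, (rule lf5)?)
schematic_goal LCp_11_13: "LCL l (eb (1,1)) (1,3) - LCR l (eb (1,1)) (1,3) = lsum l ?D"
  by (simp only: LCR_lsumk LCL_def) (simp add: vvc lfc VV_vv UU_vv lsumk_Cons lsumk_Nil PhiL_def vv_Cons_app vv_Nil_app, (rule lf5)?)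
schematic_goal RCp_12_00: "RCL L (eb (1,2)) (0,0) - RCR L (eb (1,2)) (0,0) = lsum L ?D"
  by (simp only: RCR_lsumk RCL_def) (simp add: vvc lfc pL_vv f_vv qL_vv finv_vv lsumk_Cons lsumk_Nil PhiL_def vv_Cons_app vv_Nil_app, (rule lf5)?)
schematic_goal LCp_12_00: "LCL l (eb (1,2)) (0,0) - LCR l (eb (1,2)) (0,0) = lsum l ?D"
  by (simp only: LCR_lsumk LCL_def) (simp add: vvc lfc VV_vv UU_vv lsumk_Cons lsumk_Nil PhiL_def vv_Cons_app vv_Nil_app, (rule lf5)?)
schematic_goal RCp_12_01: "RCL L (eb (1,2)) (0,1) - RCR L (eb (1,2)) (0,1) = lsum L ?D"
  by (simp only: RCR_lsumk RCL_def) (simp add: vvc lfc pL_vv f_vv qL_vv finv_vv lsumk_Cons lsumk_Nil PhiL_def vv_Cons_app vv_Nil_app, (rule lf5)?)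
schematic_goal LCp_12_01: "LCL l (eb (1,2)) (0,1) - LCR l (eb (1,2)) (0,1) = lsum l ?D"
  by (simp only: LCR_lsumk LCL_def) (simp add: vvc lfc VV_vv UU_vv lsumk_Cons lsumk_Nil PhiL_def vv_Cons_app vv_Nil_app, (rule lf5)?)
schematic_goal RCp_12_02: "RCL L (eb (1,2)) (0,2) - RCR L (eb (1,2)) (0,2) = lsum L ?D"
  by (simp only: RCR_lsumk RCL_def) (simp add: vvc lfc pL_vv f_vv qL_vv finv_vv lsumk_Cons lsumk_Nil PhiL_def vv_Cons_app vv_Nil_app, (rule lf5)?)
schematic_goal LCp_12_02: "LCL l (eb (1,2)) (0,2) - LCR l (eb (1,2)) (0,2) = lsum l ?D"
  by (simp only: LCR_lsumk LCL_def) (simp add: vvc lfc VV_vv UU_vv lsumk_Cons lsumk_Nil PhiL_def vv_Cons_app vv_Nil_app, (rule lf5)?)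
schematic_goal RCp_12_03: "RCL L (eb (1,2)) (0,3) - RCR L (eb (1,2)) (0,3) = lsum L ?D"
  by (simp only: RCR_lsumk RCL_def) (simp add: vvc lfc pL_vv f_vv qL_vv finv_vv lsumk_Cons lsumk_Nil PhiL_def vv_Cons_app vv_Nil_app, (rule lf5)?)
schematic_goal LCp_12_03: "LCL l (eb (1,2)) (0,3) - LCR l (eb (1,2)) (0,3) = lsum l ?D"
  by (simp only: LCR_lsumk LCL_def) (simp add: vvc lfc VV_vv UU_vv lsumk_Cons lsumk_Nil PhiL_def vv_Cons_app vv_Nil_app, (rule lf5)?)
schematic_goal RCp_12_10: "RCL L (eb (1,2)) (1,0) - RCR L (eb (1,2)) (1,0) = lsum L ?D"
  by (simp only: RCR_lsumk RCL_def) (simp add: vvc lfc pL_vv f_vv qL_vv finv_vv lsumk_Cons lsumk_Nil PhiL_def vv_Cons_app vv_Nil_app, (rule lf5)?)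
schematic_goal LCp_12_10: "LCL l (eb (1,2)) (1,0) - LCR l (eb (1,2)) (1,0) = lsum l ?D"
  by (simp only: LCR_lsumk LCL_def) (simp add: vvc lfc VV_vv UU_vv lsumk_Cons lsumk_Nil PhiL_def vv_Cons_app vv_Nil_app, (rule lf5)?)
schematic_goal RCp_12_11: "RCL L (eb (1,2)) (1,1) - RCR L (eb (1,2)) (1,1) = lsum L ?D"
  by (simp only: RCR_lsumk RCL_def) (simp add: vvc lfc pL_vv f_vv qL_vv finv_vv lsumk_Cons lsumk_Nil PhiL_def vv_Cons_app vv_Nil_app, (rule lf5)?)
schematic_goal LCp_12_11: "LCL l (eb (1,2)) (1,1) - LCR l (eb (1,2)) (1,1) = lsum l ?D"
  by (simp only: LCR_lsumk LCL_def) (simp add: vvc lfc VV_vv UU_vv lsumk_Cons lsumk_Nil PhiL_def vv_Cons_app vv_Nil_app, (rule lf5)?)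
schematic_goal RCp_12_12: "RCL L (eb (1,2)) (1,2) - RCR L (eb (1,2)) (1,2) = lsum L ?D"
  by (simp only: RCR_lsumk RCL_def) (simp add: vvc lfc pL_vv f_vv qL_vv finv_vv lsumk_Cons lsumk_Nil PhiL_def vv_Cons_app vv_Nil_app, (rule lf5)?)
schematic_goal LCp_12_12: "LCL l (eb (1,2)) (1,2) - LCR l (eb (1,2)) (1,2) = lsum l ?D"
  by (simp only: LCR_lsumk LCL_def) (simp add: vvc lfc VV_vv UU_vv lsumk_Cons lsumk_Nil PhiL_def vv_Cons_app vv_Nil_app, (rule lf5)?)
schematic_goal RCp_12_13: "RCL L (eb (1,2)) (1,3) - RCR L (eb (1,2)) (1,3) = lsum L ?D"
  by (simp only: RCR_lsumk RCL_def) (simp add: vvc lfc pL_vv f_vv qL_vv finv_vv lsumk_Cons lsumk_Nil PhiL_def vv_Cons_app vv_Nil_app, (rule lf5)?)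
schematic_goal LCp_12_13: "LCL l (eb (1,2)) (1,3) - LCR l (eb (1,2)) (1,3) = lsum l ?D"
  by (simp only: LCR_lsumk LCL_def) (simp add: vvc lfc VV_vv UU_vv lsumk_Cons lsumk_Nil PhiL_def vv_Cons_app vv_Nil_app, (rule lf5)?)
schematic_goal RCp_13_00: "RCL L (eb (1,3)) (0,0) - RCR L (eb (1,3)) (0,0) = lsum L ?D"
  by (simp only: RCR_lsumk RCL_def) (simp add: vvc lfc pL_vv f_vv qL_vv finv_vv lsumk_Cons lsumk_Nil PhiL_def vv_Cons_app vv_Nil_app, (rule lf5)?)
schematic_goal LCp_13_00: "LCL l (eb (1,3)) (0,0) - LCR l (eb (1,3)) (0,0) = lsum l ?D"
  by (simp only: LCR_lsumk LCL_def) (simp add: vvc lfc VV_vv UU_vv lsumk_Cons lsumk_Nil PhiL_def vv_Cons_app vv_Nil_app, (rule lf5)?)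
schematic_goal RCp_13_01: "RCL L (eb (1,3)) (0,1) - RCR L (eb (1,3)) (0,1) = lsum L ?D"
  by (simp only: RCR_lsumk RCL_def) (simp add: vvc lfc pL_vv f_vv qL_vv finv_vv lsumk_Cons lsumk_Nil PhiL_def vv_Cons_app vv_Nil_app, (rule lf5)?)
schematic_goal LCp_13_01: "LCL l (eb (1,3)) (0,1) - LCR l (eb (1,3)) (0,1) = lsum l ?D"
  by (simp only: LCR_lsumk LCL_def) (simp add: vvc lfc VV_vv UU_vv lsumk_Cons lsumk_Nil PhiL_def vv_Cons_app vv_Nil_app, (rule lf5)?)
schematic_goal RCp_13_02: "RCL L (eb (1,3)) (0,2) - RCR L (eb (1,3)) (0,2) = lsum L ?D"
  by (simp only: RCR_lsumk RCL_def) (simp add: vvc lfc pL_vv f_vv qL_vv finv_vv lsumk_Cons lsumk_Nil PhiL_def vv_Cons_app vv_Nil_app, (rule lf5)?)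
schematic_goal LCp_13_02: "LCL l (eb (1,3)) (0,2) - LCR l (eb (1,3)) (0,2) = lsum l ?D"
  by (simp only: LCR_lsumk LCL_def) (simp add: vvc lfc VV_vv UU_vv lsumk_Cons lsumk_Nil PhiL_def vv_Cons_app vv_Nil_app, (rule lf5)?)
schematic_goal RCp_13_03: "RCL L (eb (1,3)) (0,3) - RCR L (eb (1,3)) (0,3) = lsum L ?D"
  by (simp only: RCR_lsumk RCL_def) (simp add: vvc lfc pL_vv f_vv qL_vv finv_vv lsumk_Cons lsumk_Nil PhiL_def vv_Cons_app vv_Nil_app, (rule lf5)?)
schematic_goal LCp_13_03: "LCL l (eb (1,3)) (0,3) - LCR l (eb (1,3)) (0,3) = lsum l ?D"
  by (simp only: LCR_lsumk LCL_def) (simp add: vvc lfc VV_vv UU_vv lsumk_Cons lsumk_Nil PhiL_def vv_Cons_app vv_Nil_app, (rule lf5)?)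
schematic_goal RCp_13_10: "RCL L (eb (1,3)) (1,0) - RCR L (eb (1,3)) (1,0) = lsum L ?D"
  by (simp only: RCR_lsumk RCL_def) (simp add: vvc lfc pL_vv f_vv qL_vv finv_vv lsumk_Cons lsumk_Nil PhiL_def vv_Cons_app vv_Nil_app, (rule lf5)?)
schematic_goal LCp_13_10: "LCL l (eb (1,3)) (1,0) - LCR l (eb (1,3)) (1,0) = lsum l ?D"
  by (simp only: LCR_lsumk LCL_def) (simp add: vvc lfc VV_vv UU_vv lsumk_Cons lsumk_Nil PhiL_def vv_Cons_app vv_Nil_app, (rule lf5)?)
schematic_goal RCp_13_11: "RCL L (eb (1,3)) (1,1) - RCR L (eb (1,3)) (1,1) = lsum L ?D"
  by (simp only: RCR_lsumk RCL_def) (simp add: vvc lfc pL_vv f_vv qL_vv finv_vv lsumk_Cons lsumk_Nil PhiL_def vv_Cons_app vv_Nil_app, (rule lf5)?)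
schematic_goal LCp_13_11: "LCL l (eb (1,3)) (1,1) - LCR l (eb (1,3)) (1,1) = lsum l ?D"
  by (simp only: LCR_lsumk LCL_def) (simp add: vvc lfc VV_vv UU_vv lsumk_Cons lsumk_Nil PhiL_def vv_Cons_app vv_Nil_app, (rule lf5)?)
schematic_goal RCp_13_12: "RCL L (eb (1,3)) (1,2) - RCR L (eb (1,3)) (1,2) = lsum L ?D"
  by (simp only: RCR_lsumk RCL_def) (simp add: vvc lfc pL_vv f_vv qL_vv finv_vv lsumk_Cons lsumk_Nil PhiL_def vv_Cons_app vv_Nil_app, (rule lf5)?)
schematic_goal LCp_13_12: "LCL l (eb (1,3)) (1,2) - LCR l (eb (1,3)) (1,2) = lsum l ?D"
  by (simp only: LCR_lsumk LCL_def) (simp add: vvc lfc VV_vv UU_vv lsumk_Cons lsumk_Nil PhiL_def vv_Cons_app vv_Nil_app, (rule lf5)?)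
schematic_goal RCp_13_13: "RCL L (eb (1,3)) (1,3) - RCR L (eb (1,3)) (1,3) = lsum L ?D"
  by (simp only: RCR_lsumk RCL_def) (simp add: vvc lfc pL_vv f_vv qL_vv finv_vv lsumk_Cons lsumk_Nil PhiL_def vv_Cons_app vv_Nil_app, (rule lf5)?)
schematic_goal LCp_13_13: "LCL l (eb (1,3)) (1,3) - LCR l (eb (1,3)) (1,3) = lsum l ?D"
  by (simp only: LCR_lsumk LCL_def) (simp add: vvc lfc VV_vv UU_vv lsumk_Cons lsumk_Nil PhiL_def vv_Cons_app vv_Nil_app, (rule lf5)?)

lemmas RCp_all = RCp_00_00 RCp_00_01 RCp_00_02 RCp_00_03 RCp_00_10 RCp_00_11 RCp_00_12 RCp_00_13 RCp_01_00 RCp_01_01 RCp_01_02 RCp_01_03 RCp_01_10 RCp_01_11 RCp_01_12 RCp_01_13 RCp_02_00 RCp_02_01 RCp_02_02 RCp_02_03 RCp_02_10 RCp_02_11 RCp_02_12 RCp_02_13 RCp_03_00 RCp_03_01 RCp_03_02 RCp_03_03 RCp_03_10 RCp_03_11 RCp_03_12 RCp_03_13 RCp_10_00 RCp_10_01 RCp_10_02 RCp_10_03 RCp_10_10 RCp_10_11 RCp_10_12 RCp_10_13 RCp_11_00 RCp_11_01 RCp_11_02 RCp_11_03 RCp_11_10 RCp_11_11 RCp_11_12 RCp_11_13 RCp_12_00 RCp_12_01 RCp_12_02 RCp_12_03 RCp_12_10 RCp_12_11 RCp_12_12 RCp_12_13 RCp_13_00 RCp_13_01 RCp_13_02 RCp_13_03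 RCp_13_10 RCp_13_11 RCp_13_12 RCp_13_13
lemmas LCp_all = LCp_00_00 LCp_00_01 LCp_00_02 LCp_00_03 LCp_00_10 LCp_00_11 LCp_00_12 LCp_00_13 LCp_01_00 LCp_01_01 LCp_01_02 LCp_01_03 LCp_01_10 LCp_01_11 LCp_01_12 LCp_01_13 LCp_02_00 LCp_02_01 LCp_02_02 LCp_02_03 LCp_02_10 LCp_02_11 LCp_02_12 LCp_02_13 LCp_03_00 LCp_03_01 LCp_03_02 LCp_03_03 LCp_03_10 LCp_03_11 LCp_03_12 LCp_03_13 LCp_10_00 LCp_10_01 LCp_10_02 LCp_10_03 LCp_10_10 LCp_10_11 LCp_10_12 LCp_10_13 LCp_11_00 LCp_11_01 LCp_11_02 LCp_11_03 LCp_11_10 LCp_11_11 LCp_11_12 LCp_11_13 LCp_12_00 LCp_12_01 LCp_12_02 LCp_12_03 LCp_12_10 LCp_12_11 LCp_12_12 LCp_12_13 LCp_13_00 LCp_13_01 LCp_13_02 LCp_13_03 LCp_13_10 LCp_13_11 LCp_13_12 LCp_13_13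

end


definition V0L :: "(idx \<times> cq) list" where "V0L = [((0,3),(1,1,1)), ((1,3),(1,-1,1))]"
definition T0L :: "(idx \<times> cq) list" where "T0L = [((0,3),(1,0,0)), ((1,3),(1,0,0))]"
definition L0L :: "(idx \<times> cq) list" where "L0L = [((0,3),(1,0,0))]"

context qh begin

lemma vv_eq2: "X = vv A \<Longrightarrow> Y = vv B \<Longrightarrow> addl A (lsc (-1,0,0) B) = [] \<Longrightarrow> X = Y"
  using vv_trans by blast

lemma half_pj: "(1 + j) / 2 = cv (1,1,1)" "(1 - j) / 2 = cv (1,-1,1)"
  by (simp_all add: cv_def)

lemma V0_vv: "hadd (hsmul ((1 + j) / 2) (eb (0, 3))) (hsmul ((1 - j) / 2) (eb (1, 3))) = vv V0L"
  by (rule vv_trans) (simp add: half_pj vvc V0L_def)+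

lemma okl_V0L: "okl Bs V0L" by (simp add: V0L_def)
lemma okl_T0L: "okl Bs T0L" by (simp add: T0L_def)
lemma okl_L0L: "okl Bs L0L" by (simp add: L0L_def)

lemma hsmul_Hsp: "u \<in> Hsp \<Longrightarrow> hsmul c u \<in> Hsp" by (simp add: Hsp_def hsmul_def)

lemma RC_sup: "is_right_coint j (hsmul c (vv V0L))"
  unfolding RC_iff2 ball_Bs
  by (simp only: RCp_all) (simp add: lfc V0L_def)


lemma RC_sub:
  assumes "is_right_coint j L"
  shows "L (1,0) = 0 \<and> L (0,0) = 0 \<and> L (1,1) = 0 \<and> L (0,1) = 0 \<and> L (0,2) = 0 \<and> L (1,2) = 0 \<and> L (0,3) = j * L (1,3)"
proof -
  have A: "\<forall>p\<in>Bs. \<forall>r\<in>Bs. RCL L (eb p) r - RCR L (eb p) r = 0" using assms RC_iff2 by blast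
  have e1: "L (1,0) = 0" using A[rule_format, of "(0,2)" "(1,2)"] unfolding RCp_02_12
    by (simp add: lsum_Cons lsum_Nil cv_def One_nat_def numeral_2_eq_2 numeral_3_eq_3)
  have e2: "L (0,0) = 0" using A[rule_format, of "(1,2)" "(0,2)"] unfolding RCp_12_02
    by (simp add: lsum_Cons lsum_Nil cv_def One_nat_def numeral_2_eq_2 numeral_3_eq_3)
  have e3: "L (1,1) = 0" using A[rule_format, of "(0,3)" "(0,2)"] unfolding RCp_03_02
    by (simp add: lsum_Cons lsum_Nil cv_def One_nat_def numeral_2_eq_2 numeral_3_eq_3 j_ne two)
  have e4: "L (0,1) = 0" using A[rule_format, of "(1,3)" "(0,2)"] unfolding RCp_13_02
    by (simp add: lsum_Cons lsum_Nil cv_def One_nat_def numeral_2_eq_2 numeral_3_eq_3 j_ne two)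
  have e5: "L (0,2) = L (1,2)" using A[rule_format, of "(0,2)" "(0,0)"] unfolding RCp_02_00
    by (simp add: lsum_Cons lsum_Nil cv_def One_nat_def numeral_2_eq_2 numeral_3_eq_3 j_ne two field_simps)
  have e6: "- L (0,2) = L (1,2)" using A[rule_format, of "(1,2)" "(0,0)"] unfolding RCp_12_00
    by (simp add: lsum_Cons lsum_Nil cv_def One_nat_def numeral_2_eq_2 numeral_3_eq_3 j_ne two field_simps)
  have e7: "L (0,3) = j * L (1,3)" using A[rule_format, of "(1,3)" "(0,0)"] unfolding RCp_13_00
    by (simp add: lsum_Cons lsum_Nil cv_def One_nat_def numeral_2_eq_2 numeral_3_eq_3 j_ne two field_simps)
  have "2 * L (0,2) = L (0,2) - (- L (0,2))" by simp
  also have "\<dots> = L (0,2) - L (1,2)" by (subst e6) (rule refl)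
  also have "\<dots> = 0" by (simp add: e5)
  finally have "2 * L (0,2) = 0" .
  then have e8: "L (0,2) = 0" using two by simp
  then have e9: "L (1,2) = 0" using e5 by simp
  show ?thesis using e1 e2 e3 e4 e7 e8 e9 by simp
qed

lemma RC_set: "{L \<in> Hsp. is_right_coint j L} =
    {hsmul c (hadd (hsmul ((1 + j) / 2) (eb (0, 3))) (hsmul ((1 - j) / 2) (eb (1, 3)))) | c. True}"
  unfolding V0_vv
proof (intro equalityI subsetI)
  fix L assume "L \<in> {L \<in> Hsp. is_right_coint j L}"
  then have L: "L \<in> Hsp" and R: "is_right_coint j L" by auto
  have v: "L (1,0) = 0 \<and> L (0,0) = 0 \<and> L (1,1) = 0 \<and> L (0,1) = 0 \<and> L (0,2) = 0 \<and> L (1,2) = 0 \<and> L (0,3) = j * L (1,3)"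
    by (rule RC_sub[OF R])
  define c where "c = (1 + j) * L (1,3)"
  have c1: "c * cv (1,1,1) = L (0,3)"
  proof -
    have "c * cv (1,1,1) = ((1+j)*(1+j)) * L (1,3) / 2" by (simp add: c_def cv_def)
    also have "(1+j)*(1+j) = 2*j" using jj by algebra
    finally show ?thesis using v two by simp
  qed
  have c2: "c * cv (1,-1,1) = L (1,3)"
  proof -
    have "c * cv (1,-1,1) = ((1+j)*(1-j)) * L (1,3) / 2" by (simp add: c_def cv_def)
    also have "(1+j)*(1-j) = (2::'k)" using jj by algebra
    finally show ?thesis using two by simp
  qed
  have "L = hsmul c (vv V0L)"
  proof (rule ext)
    fix r
    show "L r = hsmul c (vv V0L) r"
    proof (cases "r \<in> Bs")
      case True
      then show ?thesis using v c1 c2 unfolding Bs_eq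
        by (elim insertE emptyE) (simp_all add: hsmul_def V0L_def vv_Cons_app vv_Nil_app)
    next
      case False
      have "L r = 0" using L False unfolding Hsp_def by blast
      then show ?thesis using vv_out[OF okl_V0L False] by (simp add: hsmul_def)
    qed
  qed
  then show "L \<in> {hsmul c (vv V0L) |c. True}" by blast
next
  fix L assume "L \<in> {hsmul c (vv V0L) |c. True}"
  then obtain c where c: "L = hsmul c (vv V0L)" by blast
  show "L \<in> {L \<in> Hsp. is_right_coint j L}"
    using c RC_sup hsmul_Hsp vv_Hsp okl_V0L by blast
qed


lemma hmul_eb_app: "p \<in> Bs \<Longrightarrow> hmul (eb p) t r = (\<Sum>b\<in>Bs. t b * bm p b r)"
proof -
  assume p: "p \<in> Bs"
  have "hmul (eb p) t r = (\<Sum>a\<in>Bs. (if a = p then 1 else 0) * (\<Sum>b\<in>Bs. t b * bm a b r))"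
    by (simp add: hmul_def eb_def sum_distrib_left mult.assoc)
  also have "\<dots> = (\<Sum>b\<in>Bs. t b * bm p b r)" using p by (simp add: sum_delta1)
  finally show ?thesis .
qed

lemma LI_sub:
  assumes LI: "is_left_int t"
  shows "t = hsmul (t (0,3)) (vv T0L)"
proof -
  have tH: "t \<in> Hsp" and A: "\<forall>h\<in>Hsp. hmul h t = hsmul (eps h) t" using LI by (auto simp: is_left_int_def)
  have G: "hmul (eb (1,0)) t r = hsmul (eps (eb (1,0))) t r" for r using A eb_Hsp[of "(1,0)"] by simp
  have X: "hmul (eb (0,1)) t r = hsmul (eps (eb (0,1))) t r" for r using A eb_Hsp[of "(0,1)"] by simp
  have g13: "t (0,3) = t (1,3)" using G[of "(1,3)"]
    by (simp add: hmul_eb_app) (simp add: Bs_eq bm_def hsmul_def eb_def eps_def)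
  have x1: "t (0,0) = 0" using X[of "(0,1)"]
    by (simp add: hmul_eb_app) (simp add: Bs_eq bm_def hsmul_def eb_def eps_def)
  have x2: "t (1,0) = 0" using X[of "(1,1)"]
    by (simp add: hmul_eb_app) (simp add: Bs_eq bm_def hsmul_def eb_def eps_def)
  have x3: "t (0,1) = 0" using X[of "(0,2)"]
    by (simp add: hmul_eb_app) (simp add: Bs_eq bm_def hsmul_def eb_def eps_def)
  have x4: "t (1,1) = 0" using X[of "(1,2)"]
    by (simp add: hmul_eb_app) (simp add: Bs_eq bm_def hsmul_def eb_def eps_def)
  have x5: "t (0,2) = 0" using X[of "(0,3)"]
    by (simp add: hmul_eb_app) (simp add: Bs_eq bm_def hsmul_def eb_def eps_def)
  have x6: "t (1,2) = 0" using X[of "(1,3)"]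
    by (simp add: hmul_eb_app) (simp add: Bs_eq bm_def hsmul_def eb_def eps_def)
  show ?thesis
  proof (rule ext)
    fix r
    show "t r = hsmul (t (0,3)) (vv T0L) r"
    proof (cases "r \<in> Bs")
      case True
      then show ?thesis using g13 x1 x2 x3 x4 x5 x6 unfolding Bs_eq
        by (elim insertE emptyE) (simp_all add: hsmul_def T0L_def vv_Cons_app vv_Nil_app cv_def)
    next
      case False
      have "t r = 0" using tH False unfolding Hsp_def by blast
      then show ?thesis using vv_out[OF okl_T0L False] by (simp add: hsmul_def)
    qed
  qed
qed

lemma LC_sub:
  assumes "is_left_coint j l"
  shows "l (1,3) = 0 \<and> l (1,0) = 0 \<and> l (0,0) = 0 \<and> l (0,1) = 0 \<and> l (1,1) = 0 \<and> l (0,2) = 0 \<and> l (1,2) = 0"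
proof -
  have A: "\<forall>p\<in>Bs. \<forall>r\<in>Bs. LCL l (eb p) r - LCR l (eb p) r = 0" using assms LC_iff2 by blast
  have e1: "l (1,3) = 0" using A[rule_format, of "(0,3)" "(0,0)"] unfolding LCp_03_00
    by (simp add: lsum_Cons lsum_Nil cv_def One_nat_def numeral_2_eq_2 numeral_3_eq_3)
  have e2: "l (1,0) = 0" using A[rule_format, of "(0,2)" "(1,2)"] unfolding LCp_02_12
    by (simp add: lsum_Cons lsum_Nil cv_def One_nat_def numeral_2_eq_2 numeral_3_eq_3)
  have e3: "l (0,0) = 0" using A[rule_format, of "(1,2)" "(0,2)"] unfolding LCp_12_02
    by (simp add: lsum_Cons lsum_Nil cv_def One_nat_def numeral_2_eq_2 numeral_3_eq_3)
  have e4: "l (0,1) = 0" using A[rule_format, of "(1,1)" "(0,0)"] unfolding LCp_11_00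
    by (simp add: lsum_Cons lsum_Nil cv_def One_nat_def numeral_2_eq_2 numeral_3_eq_3)
  have e5: "l (1,1) = 0" using A[rule_format, of "(0,3)" "(0,2)"] e4 unfolding LCp_03_02
    by (simp add: lsum_Cons lsum_Nil cv_def One_nat_def numeral_2_eq_2 numeral_3_eq_3 j_ne two)
  have e6: "l (0,2) = l (1,2)" using A[rule_format, of "(0,2)" "(0,0)"] unfolding LCp_02_00
    by (simp add: lsum_Cons lsum_Nil cv_def One_nat_def numeral_2_eq_2 numeral_3_eq_3 j_ne two field_simps)
  have e7: "- l (0,2) = l (1,2)" using A[rule_format, of "(1,2)" "(0,0)"] unfolding LCp_12_00
    by (simp add: lsum_Cons lsum_Nil cv_def One_nat_def numeral_2_eq_2 numeral_3_eq_3 j_ne two field_simps)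
  have "2 * l (0,2) = l (0,2) - (- l (0,2))" by simp
  also have "\<dots> = l (0,2) - l (1,2)" by (subst e7) (rule refl)
  also have "\<dots> = 0" by (simp add: e6)
  finally have "2 * l (0,2) = 0" .
  then have e8: "l (0,2) = 0" using two by simp
  then have e9: "l (1,2) = 0" using e6 by simp
  show ?thesis using e1 e2 e3 e4 e5 e8 e9 by simp
qed

lemma LC_sub2:
  assumes "is_left_coint j l"
  shows "\<forall>a\<in>Bs. l a = hsmul (l (0,3)) (vv L0L) a"
  using LC_sub[OF assms] unfolding ball_Bs
  by (simp add: hsmul_def L0L_def vv_Cons_app vv_Nil_app cv_def)

lemma hsmul0: "hsmul 0 (vv A) = vv []" by (rule ext) (simp add: hsmul_def vv_Nil_app)

lemma LI_t0: "is_left_int (vv T0L)"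
  unfolding is_left_int_def
proof
  show "vv T0L \<in> Hsp" by (rule vv_Hsp[OF okl_T0L])
  have "(\<forall>h\<in>Hsp. hmul h (vv T0L) = hsmul (eps h) (vv T0L)) = (\<forall>p\<in>Bs. hmul (eb p) (vv T0L) = hsmul (eps (eb p)) (vv T0L))"
    apply (rule lin_Hsp_iff)
    subgoal by (rule hmul_add1)
    subgoal by (rule hmul_sm1)
    subgoal by (rule ext) (simp add: hadd_def hsmul_def eps_def distrib_right sum.distrib)
    subgoal by (rule ext) (simp add: hsmul_def eps_def sum_distrib_left mult_ac)
    done
  also have "\<dots>" unfolding ball_Bs
    by (intro conjI; (rule vv_eq2, (simp add: vvc lfc T0L_def hsmul0)+))
  finally show "\<forall>h\<in>Hsp. hmul h (vv T0L) = hsmul (eps h) (vv T0L)" .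
qed

lemma LC_l0: "is_left_coint j (vv L0L)"
  unfolding LC_iff2 ball_Bs
  by (simp only: LCp_all) (simp add: lfc L0L_def)

lemma fev_t0l0: "fev (vv L0L) (Sinv j (vv T0L)) = 1"
  by (simp add: vvc lfc T0L_def L0L_def) (simp add: cv_def)


lemma fev_cong: "(\<And>a. a \<in> Bs \<Longrightarrow> l a = l' a) \<Longrightarrow> fev l u = fev l' u"
  by (simp add: fev_def)

lemma modg_cong: "(\<And>a. a \<in> Bs \<Longrightarrow> l a = l' a) \<Longrightarrow> modg j t l = modg j t l'"
  unfolding modg_def by (simp add: fev_cong[of l l'])

lemma fev_sml: "fev (hsmul d l) u = d * fev l u"
  by (simp add: fev_def hsmul_def sum_distrib_left mult_ac)

lemma modg_scale: "modg j (hsmul c t) (hsmul d l) = hsmul (c*d) (modg j t l)"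
  unfolding modg_def Delta_sm hmul2_sm2 hmul2_sm1 fev_sml
  by (rule ext) (simp add: hsmul_def sum_distrib_left split_def mult_ac)

schematic_goal X0: "hmul2 (hmul2 (qR j) (Delta j (vv T0L))) (pR j) = vv ?X"
  by (simp add: vvc qR_vv pR_vv T0L_def)

lemma sum2_vv:
  assumes "okl (Bs\<times>Bs) A"
  shows "(\<Sum>(a,b)\<in>Bs\<times>Bs. vv A (a,b) * G a b) = lsum (\<lambda>(a,b). G a b) A"
proof -
  have "(\<Sum>(a,b)\<in>Bs\<times>Bs. vv A (a,b) * G a b) = (\<Sum>x\<in>Bs\<times>Bs. vv A x * (\<lambda>(a,b). G a b) x)"
    by (rule sum.cong) (auto simp: split_def)
  also have "\<dots> = lsum (\<lambda>(a,b). G a b) A" using assms by (simp add: sum_vv)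
  finally show ?thesis .
qed

schematic_goal modg0: "modg j (vv T0L) (vv L0L) = vv ?M"
  apply (rule ext)
  apply (simp only: modg_def X0 mult.assoc)
  apply (subst sum2_vv)
   apply simp
  apply (simp only: lsum_lsumk)
  apply (simp add: vvc lfc lsumk_Cons lsumk_Nil L0L_def)
  done

schematic_goal target_vv: "hadd (hsmul ((1 + j) / 2) one1) (hsmul ((1 - j) / 2) gel) = vv ?T"
  by (simp add: half_pj vvc)

lemma modg_target: "modg j (vv T0L) (vv L0L) = hadd (hsmul ((1 + j) / 2) one1) (hsmul ((1 - j) / 2) gel)"
  by (rule vv_eq2[OF modg0 target_vv]) (simp add: vvc)

lemma prod1: "hmul (hadd (hsmul ((1 + j) / 2) one1) (hsmul ((1 - j) / 2) gel))
              (hadd (hsmul ((1 - j) / 2) one1) (hsmul ((1 + j) / 2) gel)) = one1"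
  by (rule vv_eq2) (simp add: half_pj vvc)+

lemma prod2: "hmul (hadd (hsmul ((1 - j) / 2) one1) (hsmul ((1 + j) / 2) gel))
              (hadd (hsmul ((1 + j) / 2) one1) (hsmul ((1 - j) / 2) gel)) = one1"
  by (rule vv_eq2) (simp add: half_pj vvc)+


lemma Sinv_sm: "u \<in> Hsp \<Longrightarrow> Sinv j (hsmul c u) = hsmul c (Sinv j u)"
  by (simp add: Sinv_eq hsmul_Hsp Tinv_def linext_sm)

lemma main_qh:
  "{L \<in> Hsp. is_right_coint j L} =
           {hsmul c (hadd (hsmul ((1 + j) / 2) (eb (0, 3))) (hsmul ((1 - j) / 2) (eb (1, 3)))) | c. True}
       \<and> (\<exists>t l. is_left_int t \<and> t \<noteq> (\<lambda>_. 0) \<and> is_left_coint j l \<and> fev l (Sinv j t) = 1)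
       \<and> (\<forall>t l. is_left_int t \<and> t \<noteq> (\<lambda>_. 0) \<and> is_left_coint j l \<and> fev l (Sinv j t) = 1
              \<longrightarrow> modg j t l = hadd (hsmul ((1 + j) / 2) one1) (hsmul ((1 - j) / 2) gel))
       \<and> hmul (hadd (hsmul ((1 + j) / 2) one1) (hsmul ((1 - j) / 2) gel))
              (hadd (hsmul ((1 - j) / 2) one1) (hsmul ((1 + j) / 2) gel)) = one1
       \<and> hmul (hadd (hsmul ((1 - j) / 2) one1) (hsmul ((1 + j) / 2) gel))
              (hadd (hsmul ((1 + j) / 2) one1) (hsmul ((1 - j) / 2) gel)) = one1"
proof (intro conjI)
  show "{L \<in> Hsp. is_right_coint j L} =
           {hsmul c (hadd (hsmul ((1 + j) / 2) (eb (0, 3))) (hsmul ((1 - j) / 2) (eb (1, 3)))) | c. True}"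
    by (rule RC_set)
  have nz: "vv T0L \<noteq> (\<lambda>_. 0)"
  proof
    assume "vv T0L = (\<lambda>_. 0)"
    then have "vv T0L (0,3) = 0" by simp
    then show False by (simp add: T0L_def vv_Cons_app vv_Nil_app cv_def)
  qed
  show "\<exists>t l. is_left_int t \<and> t \<noteq> (\<lambda>_. 0) \<and> is_left_coint j l \<and> fev l (Sinv j t) = 1"
    using LI_t0 nz LC_l0 fev_t0l0 by blast
  show "\<forall>t l. is_left_int t \<and> t \<noteq> (\<lambda>_. 0) \<and> is_left_coint j l \<and> fev l (Sinv j t) = 1
              \<longrightarrow> modg j t l = hadd (hsmul ((1 + j) / 2) one1) (hsmul ((1 - j) / 2) gel)"
  proof (intro allI impI)
    fix t l assume H: "is_left_int t \<and> t \<noteq> (\<lambda>_. 0) \<and> is_left_coint j l \<and> fev l (Sinv j t) = 1"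
    define c where "c = t (0,3)"
    define d where "d = l (0,3)"
    have t: "t = hsmul c (vv T0L)" using LI_sub H c_def by blast
    have l: "\<And>a. a \<in> Bs \<Longrightarrow> l a = hsmul d (vv L0L) a" using LC_sub2 H d_def by blast
    have "1 = fev l (Sinv j t)" using H by simp
    also have "\<dots> = fev (hsmul d (vv L0L)) (Sinv j t)" by (rule fev_cong) (rule l)
    also have "\<dots> = d * (c * fev (vv L0L) (Sinv j (vv T0L)))"
      by (simp add: t fev_sml Sinv_sm vv_Hsp okl_T0L fev_sm)
    also have "\<dots> = c * d" by (simp add: fev_t0l0)
    finally have cd: "c * d = 1" by simp
    have "modg j t l = modg j t (hsmul d (vv L0L))" by (rule modg_cong) (rule l)
    also have "\<dots> = hsmul (c*d) (modg j (vv T0L) (vv L0L))" by (simp add: t modg_scale)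
    also have "\<dots> = modg j (vv T0L) (vv L0L)" by (simp add: cd hsmul_def)
    also have "\<dots> = hadd (hsmul ((1 + j) / 2) one1) (hsmul ((1 - j) / 2) gel)" by (rule modg_target)
    finally show "modg j t l = hadd (hsmul ((1 + j) / 2) one1) (hsmul ((1 - j) / 2) gel)" .
  qed
  show "hmul (hadd (hsmul ((1 + j) / 2) one1) (hsmul ((1 - j) / 2) gel))
              (hadd (hsmul ((1 - j) / 2) one1) (hsmul ((1 + j) / 2) gel)) = one1" by (rule prod1)
  show "hmul (hadd (hsmul ((1 - j) / 2) one1) (hsmul ((1 + j) / 2) gel))
              (hadd (hsmul ((1 + j) / 2) one1) (hsmul ((1 - j) / 2) gel)) = one1" by (rule prod2)
qed

end

theorem mainTheorem17:
  fixes i s :: "'k::field"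
  assumes "i ^ 4 = 1" and "i ^ 2 \<noteq> 1" and "s = 1 \<or> s = -1"
  shows "{L \<in> Hsp. is_right_coint (s * i) L} =
           {hsmul c (hadd (hsmul ((1 + s * i) / 2) (eb (0, 3))) (hsmul ((1 - s * i) / 2) (eb (1, 3)))) | c. True}
       \<and> (\<exists>t l. is_left_int t \<and> t \<noteq> (\<lambda>_. 0) \<and> is_left_coint (s * i) l \<and> fev l (Sinv (s * i) t) = 1)
       \<and> (\<forall>t l. is_left_int t \<and> t \<noteq> (\<lambda>_. 0) \<and> is_left_coint (s * i) l \<and> fev l (Sinv (s * i) t) = 1
              \<longrightarrow> modg (s * i) t l = hadd (hsmul ((1 + s * i) / 2) one1) (hsmul ((1 - s * i) / 2) gel))
       \<and> hmul (hadd (hsmul ((1 + s * i) / 2) one1) (hsmul ((1 - s * i) / 2) gel))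
              (hadd (hsmul ((1 - s * i) / 2) one1) (hsmul ((1 + s * i) / 2) gel)) = one1
       \<and> hmul (hadd (hsmul ((1 - s * i) / 2) one1) (hsmul ((1 + s * i) / 2) gel))
              (hadd (hsmul ((1 + s * i) / 2) one1) (hsmul ((1 - s * i) / 2) gel)) = one1"
proof -
  have ii: "i * i = -1"
  proof -
    have "(i * i - 1) * (i * i + 1) = i ^ 4 - 1" by (simp add: algebra_simps power4_eq_xxxx)
    also have "\<dots> = 0" using assms(1) by simp
    finally have "i * i - 1 = 0 \<or> i * i + 1 = 0" by simp
    moreover have "i * i - 1 \<noteq> 0" using assms(2) by (simp add: power2_eq_square)
    ultimately have "i * i + 1 = 0" by simp
    then show ?thesis by (simp add: eq_neg_iff_add_eq_0)
  qed
  have ss: "s * s = 1" using assms(3) by auto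
  have jj: "(s * i) * (s * i) = -1" using ii ss by (metis mult.commute mult.left_commute mult_1 mult.assoc)
  have two: "(2::'k) \<noteq> 0"
  proof
    assume "(2::'k) = 0"
    then have "(1::'k) = -1" by (metis add.inverse_unique one_add_one)
    then have "i * i = 1" using ii by simp
    then show False using assms(2) by (simp add: power2_eq_square)
  qed
  interpret qh "s * i" using jj two by unfold_locales
  show ?thesis by (rule main_qh)
qed


end
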